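(* Let $(\{(l_1,w_1),\ldots,(l_{|N|},w_{|N|})\}, l_{\mathrm{bin}})$ be nonnegative integers with $0<l_k\le l_{\mathrm{bin}}$, and let $(N,v)$ be the greedy knapsack budgeted game with $v(S)=w(\mathcal A'(S))$ for all $S\subseteq N$, where $\mathcal A'$ is the greedy heuristic described in the context. Then the Shapley value $\phi_i(v)$ of any given agent $i$ can be computed in time $O\big(l_{\mathrm{bin}}^5\, w_{\max}^5\, |N|^8\big)$, where $w_{\max}=\lceil l_{\mathrm{bin}}\cdot \max_k w_k/l_k\rceil$.
   Context: A cooperative game $(N,v)$ consists of a finite set $N$ of agents and a function $v:2^N\to\mathbb R$ with $v(\emptyset)=0$. The Shapley value of agent $i$ is $\phi_i(v)=\sum_{S\subseteq N\setminus\{i\}}\frac{|S|!\,(|N|-|S|-1)!}{|N|!}\big(v(S\cup\{i\})-v(S)\big)$. Write $w(S)=\sum_{k\in S}w_k$, $l(S)=\sum_{k\in S}l_k$. Fix a linear order on $N$ (agents labeled $1,\ldots,|N|$) such that $w_1/l_1\ge w_2/l_2\ge\cdots\ge w_{|N|}/l_{|N|}$. The greedy heuristic $\mathcal A'(S)$ for $S\subseteq N$ nonempty: (1) let $a$ be the agent of $S$ with maximum $w_a$, ties broken by lowest index; (2) go through the agents of $S$ in increasing index order (i.e. decreasing $w_k/l_k$), adding each to a set $S'$ while the total length stays at most $l_{\mathrm{bin}}$, and stop at the first agent that does not fit; (3) return $S'$ if $w(S')\ge w_a$, and $\{a\}$ otherwise. Set $\mathcal A'(\emptyset)=\emptyset$.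 Running times count arithmetic operations at unit cost. *)

theory Defs
  imports Complex_Main
begin

definition shapley :: "nat set \<Rightarrow> (nat set \<Rightarrow> real) \<Rightarrow> nat \<Rightarrow> real" where
  "shapley N v i = (\<Sum>S\<in>Pow (N - {i}).
      (fact (card S) * fact (card N - card S - 1) / fact (card N)) * (v (S \<union> {i}) - v S))"

fun take_fit :: "(nat \<Rightarrow> nat) \<Rightarrow> nat \<Rightarrow> nat list \<Rightarrow> nat list" where
  "take_fit l b [] = []"
| "take_fit l b (k # ks) = (if l k \<le> b then k # take_fit l (b - l k) ks else [])"

definition max_agent :: "(nat \<Rightarrow> nat) \<Rightarrow> nat set \<Rightarrow> nat" where
  "max_agent w S = Min {k \<in> S. w k = Max (w ` S)}"

definition greedy :: "(nat \<Rightarrow> nat) \<Rightarrow> (nat \<Rightarrow> nat) \<Rightarrow> nat \<Rightarrow> nat set \<Rightarrow> nat set" where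
  "greedy l w lbin S =
     (if S = {} then {}
      else (let S' = set (take_fit l lbin (sorted_list_of_set S));
                a = max_agent w S
            in if sum w S' \<ge> w a then S' else {a}))"

definition greedy_game :: "(nat \<Rightarrow> nat) \<Rightarrow> (nat \<Rightarrow> nat) \<Rightarrow> nat \<Rightarrow> nat set \<Rightarrow> real" where
  "greedy_game l w lbin S = real (sum w (greedy l w lbin S))"

definition wmax :: "nat \<Rightarrow> (nat \<Rightarrow> nat) \<Rightarrow> (nat \<Rightarrow> nat) \<Rightarrow> nat \<Rightarrow> nat" where
  "wmax n l w lbin = nat \<lceil>real lbin * Max ((\<lambda>k. real (w k) / real (l k)) ` {1..n})\<rceil>"

text \<open>Memory is an infinite array of integer registers; every instruction costs one step.\<close>
datatype instr =
    LoadConst nat int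
  | Add nat nat nat
  | Sub nat nat nat
  | Mul nat nat nat
  | Div nat nat nat
  | Load nat nat
  | Store nat nat
  | Jz nat nat
  | Jneg nat nat
  | Jmp nat                    \<comment> \<open>goto t (t \<ge> length of program halts)\<close>

type_synonym config = "nat \<times> (nat \<Rightarrow> int)"

fun exec_instr :: "instr \<Rightarrow> config \<Rightarrow> config" where
  "exec_instr (LoadConst d c) (pc, m) = (Suc pc, m(d := c))"
| "exec_instr (Add d a b) (pc, m) = (Suc pc, m(d := m a + m b))"
| "exec_instr (Sub d a b) (pc, m) = (Suc pc, m(d := m a - m b))"
| "exec_instr (Mul d a b) (pc, m) = (Suc pc, m(d := m a * m b))"
| "exec_instr (Div d a b) (pc, m) = (Suc pc, m(d := m a div m b))"
| "exec_instr (Load d s) (pc, m) = (Suc pc, m(d := m (nat (m s))))"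
| "exec_instr (Store d s) (pc, m) = (Suc pc, m(nat (m d) := m s))"
| "exec_instr (Jz r t) (pc, m) = (if m r = 0 then t else Suc pc, m)"
| "exec_instr (Jneg r t) (pc, m) = (if m r < 0 then t else Suc pc, m)"
| "exec_instr (Jmp t) (pc, m) = (t, m)"

definition step :: "instr list \<Rightarrow> config \<Rightarrow> config" where
  "step P c = (if fst c < length P then exec_instr (P ! fst c) c else c)"

definition halted :: "instr list \<Rightarrow> config \<Rightarrow> bool" where
  "halted P c \<longleftrightarrow> fst c \<ge> length P"

definition runs_within :: "instr list \<Rightarrow> (nat \<Rightarrow> int) \<Rightarrow> nat \<Rightarrow> (nat \<Rightarrow> int) \<Rightarrow> bool" where
  "runs_within P m0 t m \<longleftrightarrow>
     (\<exists>t'\<le>t. halted P ((step P ^^ t') (0, m0)) \<and> snd ((step P ^^ t') (0, m0)) = m)"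

text \<open>Input encoding: m[0] = |N|, m[1] = l_bin, m[2] = i, and for k = 1..|N|:
  m[3 + 2(k-1)] = l_k, m[4 + 2(k-1)] = w_k; all other registers 0.\<close>
definition input_mem :: "nat \<Rightarrow> nat \<Rightarrow> (nat \<Rightarrow> nat) \<Rightarrow> (nat \<Rightarrow> nat) \<Rightarrow> nat \<Rightarrow> nat \<Rightarrow> int" where
  "input_mem n lbin l w i a =
     (if a = 0 then int n
      else if a = 1 then int lbin
      else if a = 2 then int i
      else if 3 \<le> a \<and> a < 3 + 2 * n then
        (if even (a - 3) then int (l ((a - 3) div 2 + 1)) else int (w ((a - 3) div 2 + 1)))
      else 0)"

definition outputs :: "(nat \<Rightarrow> int) \<Rightarrow> real \<Rightarrow> bool" where
  "outputs m x \<longleftrightarrow> m 1 \<noteq> 0 \<and> real_of_int (m 0) / real_of_int (m 1) = x"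

end

theory Submission
  imports Defs
begin


datatype cond = CNeg nat | CZero nat

fun jmp_of :: "cond \<Rightarrow> nat \<Rightarrow> instr" where
  "jmp_of (CNeg r) t = Jneg r t" | "jmp_of (CZero r) t = Jz r t"

fun holds :: "cond \<Rightarrow> (nat \<Rightarrow> int) \<Rightarrow> bool" where
  "holds (CNeg r) m = (m r < 0)" | "holds (CZero r) m = (m r = 0)"

fun nonjump :: "instr \<Rightarrow> bool" where
  "nonjump (Jz _ _) = False" | "nonjump (Jneg _ _) = False" | "nonjump (Jmp _) = False"
| "nonjump _ = True"

definition mexec :: "instr \<Rightarrow> (nat \<Rightarrow> int) \<Rightarrow> (nat \<Rightarrow> int)" where
  "mexec i m = snd (exec_instr i (0, m))"

lemma exec_nonjump: "nonjump i \<Longrightarrow> exec_instr i (pc, m) = (Suc pc, mexec i m)"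
  by (cases i) (auto simp: mexec_def)

datatype com = Basic instr | Seq com com | If cond com com | Until cond com

fun clen :: "com \<Rightarrow> nat" where
  "clen (Basic i) = 1"
| "clen (Seq a b) = clen a + clen b"
| "clen (If c a b) = clen a + clen b + 2"
| "clen (Until c b) = clen b + 2"

fun comp :: "nat \<Rightarrow> com \<Rightarrow> instr list" where
  "comp q (Basic i) = [i]"
| "comp q (Seq a b) = comp q a @ comp (q + clen a) b"
| "comp q (If c a b) = [jmp_of c (q + clen b + 2)] @ comp (Suc q) b @ [Jmp (q + clen b + 2 + clen a)] @ comp (q + clen b + 2) a"
| "comp q (Until c b) = [jmp_of c (q + clen b + 2)] @ comp (Suc q) b @ [Jmp q]"

lemma length_comp[simp]: "length (comp q c) = clen c"
  by (induction c arbitrary: q) auto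

inductive big :: "com \<Rightarrow> (nat\<Rightarrow>int) \<Rightarrow> (nat\<Rightarrow>int) \<Rightarrow> nat \<Rightarrow> bool" where
  bBasic: "nonjump i \<Longrightarrow> big (Basic i) m (mexec i m) 1"
| bSeq: "big a m m1 t1 \<Longrightarrow> big b m1 m2 t2 \<Longrightarrow> big (Seq a b) m m2 (t1+t2)"
| bIfT: "holds c m \<Longrightarrow> big a m m' t \<Longrightarrow> big (If c a b) m m' (Suc t)"
| bIfF: "\<not>holds c m \<Longrightarrow> big b m m' t \<Longrightarrow> big (If c a b) m m' (t+2)"
| bUntilT: "holds c m \<Longrightarrow> big (Until c b) m m 1"
| bUntilF: "\<not> holds c m \<Longrightarrow> big b m m1 t1 \<Longrightarrow> big (Until c b) m1 m2 t2 \<Longrightarrow> big (Until c b) m m2 (t1 + t2 + 2)"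

definition placed :: "instr list \<Rightarrow> nat \<Rightarrow> com \<Rightarrow> bool" where
  "placed P q c \<longleftrightarrow> q + clen c \<le> length P \<and> (\<forall>j < clen c. P ! (q+j) = comp q c ! j)"

lemma at_Seq: assumes "placed P q (Seq a b)" shows "placed P q a \<and> placed P (q + clen a) b"
proof -
  have L: "q + clen a + clen b \<le> length P" and E: "\<And>j. j < clen a + clen b \<Longrightarrow> P ! (q+j) = (comp q a @ comp (q + clen a) b) ! j"
    using assms unfolding placed_def by auto
  have 1: "placed P q a" unfolding placed_def
  proof (intro conjI allI impI)
    show "q + clen a \<le> length P" using L by simp
    fix j assume "j < clen a" then show "P ! (q + j) = comp q a ! j" using E[of j] by (simp add: nth_append)
  qed
  have 2: "placed P (q + clen a) b" unfolding placed_def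
  proof (intro conjI allI impI)
    show "q + clen a + clen b \<le> length P" using L by simp
    fix j assume "j < clen b" then show "P ! (q + clen a + j) = comp (q + clen a) b ! j"
      using E[of "clen a + j"] by (simp add: nth_append add.assoc)
  qed
  show ?thesis using 1 2 by simp
qed

lemma at_If: assumes "placed P q (If c a b)"
  shows "P ! q = jmp_of c (q + clen b + 2)" "placed P (Suc q) b"
    "P ! (q + clen b + 1) = Jmp (q + clen b + 2 + clen a)" "placed P (q + clen b + 2) a"
    "q < length P" "q + clen b + 1 < length P"
proof -
  have L: "q + clen a + clen b + 2 \<le> length P" and E: "\<And>j. j < clen a + clen b + 2 \<Longrightarrow> P ! (q+j) = comp q (If c a b) ! j"
    using assms unfolding placed_def by auto
  show "P ! q = jmp_of c (q + clen b + 2)" using E[of 0] by simp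
  show "placed P (Suc q) b" unfolding placed_def
  proof (intro conjI allI impI)
    show "Suc q + clen b \<le> length P" using L by simp
    fix j assume "j < clen b"
    then show "P ! (Suc q + j) = comp (Suc q) b ! j" using E[of "Suc j"] by (simp add: nth_append)
  qed
  show "P ! (q + clen b + 1) = Jmp (q + clen b + 2 + clen a)" using E[of "clen b + 1"]
    by (simp add: nth_append)
  show "placed P (q + clen b + 2) a" unfolding placed_def
  proof (intro conjI allI impI)
    show "q + clen b + 2 + clen a \<le> length P" using L by simp
    fix j assume "j < clen a"
    then show "P ! (q + clen b + 2 + j) = comp (q + clen b + 2) a ! j" using E[of "clen b + 2 + j"]
      by (simp add: nth_append add.assoc)
  qed
  show "q < length P" "q + clen b + 1 < length P" using L by auto
qed

lemma at_Until: assumes "placed P q (Until c b)"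
  shows "P ! q = jmp_of c (q + clen b + 2)" "placed P (Suc q) b"
    "P ! (q + clen b + 1) = Jmp q" "q < length P" "q + clen b + 1 < length P"
proof -
  have L: "q + clen b + 2 \<le> length P" and E: "\<And>j. j < clen b + 2 \<Longrightarrow> P ! (q+j) = comp q (Until c b) ! j"
    using assms unfolding placed_def by auto
  show "P ! q = jmp_of c (q + clen b + 2)" using E[of 0] by simp
  show "placed P (Suc q) b" unfolding placed_def
  proof (intro conjI allI impI)
    show "Suc q + clen b \<le> length P" using L by simp
    fix j assume "j < clen b"
    then show "P ! (Suc q + j) = comp (Suc q) b ! j" using E[of "Suc j"] by (simp add: nth_append)
  qed
  show "P ! (q + clen b + 1) = Jmp q" using E[of "clen b + 1"]
    by (simp add: nth_append)
  show "q < length P" "q + clen b + 1 < length P" using L by auto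
qed

lemma step_jmp_of: "exec_instr (jmp_of c t) (pc, m) = (if holds c m then t else Suc pc, m)"
  by (cases c) auto

lemma fp_suc: "(f ^^ Suc n) x = (f ^^ n) (f x)" by (simp only: funpow_Suc_right comp_apply)
lemma fp_add: "(f ^^ (a+b)) x = (f ^^ b) ((f ^^ a) x)" by (simp only: add.commute[of a b] funpow_add comp_apply)
lemma fp2: "(f ^^ (t+2)) x = f ((f ^^ t) (f x))"
proof -
  have "t + 2 = Suc (Suc t)" by simp
  then show ?thesis by (simp add: funpow_swap1)
qed

lemma big_correct: "big c m m' t \<Longrightarrow> placed P q c \<Longrightarrow> (step P ^^ t) (q, m) = (q + clen c, m')"
proof (induction arbitrary: q rule: big.induct)
  case (bBasic i m)
  then have "q < length P" "P ! q = i" unfolding placed_def by auto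
  then show ?case using bBasic by (simp add: step_def exec_nonjump)
next
  case (bSeq a m m1 t1 b m2 t2)
  from at_Seq[OF bSeq.prems] have A: "placed P q a" "placed P (q + clen a) b" by auto
  have "(step P ^^ (t1+t2)) (q, m) = (step P ^^ t2) ((step P ^^ t1) (q, m))"
    by (simp only: add.commute[of t1 t2] funpow_add comp_apply)
  also have "\<dots> = (q + clen (Seq a b), m2)" using bSeq.IH A by (simp add: add.assoc)
  finally show ?case .
next
  case (bIfT c m a m' t b)
  note A = at_If[OF bIfT.prems]
  have "step P (q, m) = (q + clen b + 2, m)"
    using A bIfT.hyps by (simp add: step_def step_jmp_of)
  then have "(step P ^^ Suc t) (q, m) = (step P ^^ t) (q + clen b + 2, m)"
    by (simp only: fp_suc)
  also have "\<dots> = (q + clen (If c a b), m')" using bIfT.IH[OF A(4)] by simp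
  finally show ?case .
next
  case (bIfF c m b m' t a)
  note A = at_If[OF bIfF.prems]
  have "step P (q, m) = (Suc q, m)"
    using A bIfF.hyps by (simp add: step_def step_jmp_of)
  then have "(step P ^^ (t+2)) (q, m) = step P ((step P ^^ t) (Suc q, m))"
    by (simp only: fp2)
  also have "(step P ^^ t) (Suc q, m) = (q + clen b + 1, m')" using bIfF.IH[OF A(2)] by simp
  also have "step P (q + clen b + 1, m') = (q + clen (If c a b), m')"
    using A by (simp add: step_def)
  finally show ?case .
next
  case (bUntilT c m b)
  note A = at_Until[OF bUntilT.prems]
  show ?case using A bUntilT.hyps by (simp add: step_def step_jmp_of)
next
  case (bUntilF c m b m1 t1 m2 t2)
  note A = at_Until[OF bUntilF.prems]
  have "step P (q, m) = (Suc q, m)"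
    using A bUntilF.hyps by (simp add: step_def step_jmp_of)
  have "(step P ^^ (t1 + t2 + 2)) (q, m) = (step P ^^ t2) (step P ((step P ^^ t1) (step P (q, m))))"
  proof -
    have "t1 + t2 + 2 = (t1 + 2) + t2" by simp
    then show ?thesis by (simp only: fp_add[where a="t1+2" and b=t2] fp2)
  qed
  also have "step P (q, m) = (Suc q, m)"
    using A bUntilF.hyps by (simp add: step_def step_jmp_of)
  also have "(step P ^^ t1) (Suc q, m) = (q + clen b + 1, m1)" using bUntilF.IH(1)[OF A(2)] by simp
  also have "step P (q + clen b + 1, m1) = (q, m1)" using A by (simp add: step_def)
  also have "(step P ^^ t2) (q, m1) = (q + clen (Until c b), m2)" using bUntilF.IH(2) bUntilF.prems by simp
  finally show ?case .
qed

lemma at_top: "placed (comp 0 c) 0 c" by (simp add: placed_def)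

lemma runs_within_big:
  assumes "big c m0 m t" "t \<le> T"
  shows "runs_within (comp 0 c) m0 T m"
proof -
  have "(step (comp 0 c) ^^ t) (0, m0) = (clen c, m)" using big_correct[OF assms(1) at_top] by simp
  then show ?thesis unfolding runs_within_def halted_def using assms(2) by (intro exI[of _ t]) auto
qed

definition wp :: "com \<Rightarrow> (nat \<Rightarrow> int) \<Rightarrow> ((nat \<Rightarrow> int) \<Rightarrow> nat \<Rightarrow> bool) \<Rightarrow> bool" where
  "wp c m Q \<longleftrightarrow> (\<exists>m' t. big c m m' t \<and> Q m' t)"

lemma wp_mono: "wp c m Q \<Longrightarrow> (\<And>m' t. Q m' t \<Longrightarrow> Q' m' t) \<Longrightarrow> wp c m Q'"
  unfolding wp_def by blast

lemma wp_Basic: "nonjump i \<Longrightarrow> Q (mexec i m) 1 \<Longrightarrow> wp (Basic i) m Q"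
  unfolding wp_def by (blast intro: big.intros)

lemma wp_Seq: "wp a m (\<lambda>m1 t1. wp b m1 (\<lambda>m2 t2. Q m2 (t1+t2))) \<Longrightarrow> wp (Seq a b) m Q"
  unfolding wp_def by (blast intro: big.intros)

lemma wp_If: "(holds c m \<Longrightarrow> wp a m (\<lambda>m' t. Q m' (Suc t))) \<Longrightarrow> (\<not> holds c m \<Longrightarrow> wp b m (\<lambda>m' t. Q m' (t+2)))
  \<Longrightarrow> wp (If c a b) m Q"
  unfolding wp_def by (cases "holds c m") (blast intro: big.intros)+

lemma wp_Until:
  assumes "I k m"
    and "\<And>m. I 0 m \<Longrightarrow> holds c m"
    and "\<And>j m. I (Suc j) m \<Longrightarrow> \<not> holds c m \<and> wp b m (\<lambda>m' t. I j m' \<and> t \<le> K)"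
  shows "wp (Until c b) m (\<lambda>m' t. I 0 m' \<and> t \<le> k * (K + 2) + 1)"
  using assms(1)
proof (induction k arbitrary: m)
  case 0
  then show ?case unfolding wp_def using assms(2) bUntilT[of c m b] by (intro exI[of _ m] exI[of _ 1]) auto
next
  case (Suc k)
  from assms(3)[OF Suc.prems] obtain m1 t1 where B: "\<not> holds c m" "big b m m1 t1" "I k m1" "t1 \<le> K"
    unfolding wp_def by blast
  from Suc.IH[OF B(3)] obtain m2 t2 where C: "big (Until c b) m1 m2 t2" "I 0 m2" "t2 \<le> k * (K+2) + 1"
    unfolding wp_def by blast
  show ?case unfolding wp_def
    by (rule exI[of _ m2], rule exI[of _ "t1 + t2 + 2"]) (use B C bUntilF[of c m b m1 t1 m2 t2] in auto)
qed


fun R :: "nat \<Rightarrow> (nat\<Rightarrow>nat) \<Rightarrow> (nat\<Rightarrow>nat) \<Rightarrow> nat \<Rightarrow> nat \<Rightarrow> nat \<Rightarrow> nat \<Rightarrow> nat \<Rightarrow> nat \<Rightarrow> nat \<Rightarrow> nat \<Rightarrow> nat \<Rightarrow> nat" where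
  "R n l w i PW 0 s b pw mw fl md = fact s * fact (n - 1 - s) * max pw mw"
| "R n l w i PW (Suc d) s b pw mw fl md =
    (let k = n - d;
         s' = (if k = i \<and> md = 1 then s else min (s+1) n);
         mw' = max mw (w k);
         tk = (if fl = 0 \<and> l k \<le> b then R n l w i PW d s' (b - l k) (min (pw + w k) PW) mw' 0 md
               else R n l w i PW d s' b pw mw' 1 md);
         sk = R n l w i PW d s b pw mw fl md
     in if k = i then (if md = 1 then tk else sk) else sk + tk)"

fun gs :: "(nat\<Rightarrow>nat) \<Rightarrow> (nat\<Rightarrow>nat) \<Rightarrow> nat \<Rightarrow> nat\<times>nat\<times>nat\<times>nat \<Rightarrow> nat\<times>nat\<times>nat\<times>nat" where
  "gs l w k (b, pw, mw, fl) = (if fl = 0 \<and> l k \<le> b then (b - l k, pw + w k, max mw (w k), 0)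
      else (b, pw, max mw (w k), 1))"

definition fin :: "(nat\<Rightarrow>nat) \<Rightarrow> (nat\<Rightarrow>nat) \<Rightarrow> nat list \<Rightarrow> nat\<times>nat\<times>nat\<times>nat \<Rightarrow> nat\<times>nat\<times>nat\<times>nat" where
  "fin l w xs st = foldl (\<lambda>st k. gs l w k st) st xs"

fun val :: "nat\<times>nat\<times>nat\<times>nat \<Rightarrow> nat" where
  "val (b, pw, mw, fl) = max pw mw"

lemma fin_Cons: "fin l w (k # xs) st = fin l w xs (gs l w k st)"
  by (simp add: fin_def)
lemma fin_Nil: "fin l w [] st = st" by (simp add: fin_def)

definition Iset :: "nat \<Rightarrow> nat \<Rightarrow> nat set \<Rightarrow> nat set" where
  "Iset md i A = (if md = 1 then {i} \<inter> A else {})"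

definition Aset :: "nat \<Rightarrow> nat \<Rightarrow> nat set" where
  "Aset n d = {n - d <.. n}"

lemma Aset_Suc: "Suc d \<le> n \<Longrightarrow> Aset n (Suc d) = insert (n - d) (Aset n d)"
  unfolding Aset_def by auto

lemma sum_Pow_insert:
  fixes f :: "nat set \<Rightarrow> nat"
  assumes "finite B" "k \<notin> B"
  shows "sum f (Pow (insert k B)) = sum f (Pow B) + sum (\<lambda>T. f (insert k T)) (Pow B)"
proof -
  have "sum f (Pow (insert k B)) = sum f (Pow B) + sum f (insert k ` Pow B)"
    unfolding Pow_insert by (rule sum.union_disjoint) (use assms in auto)
  also have "sum f (insert k ` Pow B) = sum (\<lambda>T. f (insert k T)) (Pow B)"
    by (rule sum.reindex_cong[where l="insert k"]) (use assms in \<open>auto simp: inj_on_def\<close>)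
  finally show ?thesis .
qed

lemma sorted_insert_min:
  assumes "finite T" "\<forall>x\<in>T. k < x"
  shows "sorted_list_of_set (insert k T) = k # sorted_list_of_set T"
proof -
  have "Min (insert k T) = k" using assms by (auto intro!: Min_eqI)
  moreover have "insert k T - {k} = T" using assms by auto
  ultimately show ?thesis using sorted_list_of_set_nonempty[of "insert k T"] assms by simp
qed

lemma R_sum:
  assumes "d \<le> n" "s + d \<le> n" "pw + sum w (Aset n d) \<le> PW" "md \<le> 1"
  shows "R n l w i PW d s b pw mw fl md =
    (\<Sum>T\<in>Pow (Aset n d - {i}). fact (s + card T) * fact (n - 1 - (s + card T))
        * val (fin l w (sorted_list_of_set (T \<union> Iset md i (Aset n d))) (b, pw, mw, fl)))"
  using assms
proof (induction d arbitrary: s b pw mw fl)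
  case 0
  have "Aset n 0 = {}" unfolding Aset_def by auto
  then show ?case by (simp add: Iset_def fin_Nil)
next
  case (Suc d)
  define k where "k = n - d"
  define A where "A = Aset n d"
  have AS: "Aset n (Suc d) = insert k A" using Aset_Suc[OF Suc.prems(1)] by (simp add: k_def A_def)
  have kA: "k \<notin> A" "\<forall>x\<in>A. k < x" "finite A" unfolding k_def A_def Aset_def by auto
  have sumA: "sum w (Aset n (Suc d)) = w k + sum w A" using AS kA by simp
  let ?F = "\<lambda>A' md' s' st T. fact (s' + card T) * fact (n - 1 - (s' + card T))
        * val (fin l w (sorted_list_of_set (T \<union> Iset md' i A')) st)"
  have fT: "finite T" if "T \<subseteq> A" for T using kA(3) finite_subset that by blast
  show ?case
  proof (cases "k = i")
    case True
    have iA: "i \<notin> A" using kA True by auto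
    have E: "Aset n (Suc d) - {i} = A" using AS True iA by auto
    show ?thesis
    proof (cases "md = 1")
      case md1: True
      have IS: "Iset md i (insert k A) = {k}" "Iset md i A = {}" using md1 True iA by (auto simp: Iset_def)
      have "R n l w i PW (Suc d) s b pw mw fl md =
         (if fl = 0 \<and> l k \<le> b then R n l w i PW d s (b - l k) (min (pw + w k) PW) (max mw (w k)) 0 md
               else R n l w i PW d s b pw (max mw (w k)) 1 md)"
        using True md1 by (simp add: k_def Let_def)
      also have "\<dots> = (\<Sum>T\<in>Pow A. ?F A md s (gs l w k (b, pw, mw, fl)) T)"
      proof (cases "fl = 0 \<and> l k \<le> b")
        case True
        have "min (pw + w k) PW = pw + w k" using Suc.prems(3) sumA by simp
        then show ?thesis using True Suc.IH[of s "pw + w k"] Suc.prems sumA iA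
          by (simp add: A_def)
      next
        case False
        then show ?thesis using Suc.IH[of s pw] Suc.prems sumA iA by (auto simp: A_def)
      qed
      also have "\<dots> = (\<Sum>T\<in>Pow (Aset n (Suc d) - {i}). ?F (Aset n (Suc d)) md s (b, pw, mw, fl) T)"
        unfolding E unfolding AS
      proof (rule sum.cong[OF refl])
        fix T assume "T \<in> Pow A"
        then have "T \<subseteq> A" by auto
        then have "sorted_list_of_set (T \<union> {k}) = k # sorted_list_of_set T"
          using sorted_insert_min[of T k] fT kA by auto
        then show "?F A md s (gs l w k (b, pw, mw, fl)) T = ?F (insert k A) md s (b, pw, mw, fl) T"
          using IS by (simp add: fin_Cons)
      qed
      finally show ?thesis .
    next
      case md0: False
      then have md0': "md = 0" using Suc.prems by simp
      have IS: "Iset md i (insert k A) = {}" "Iset md i A = {}" using md0' by (auto simp: Iset_def)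
      have "R n l w i PW (Suc d) s b pw mw fl md = R n l w i PW d s b pw mw fl md"
        using True md0 by (simp add: k_def Let_def)
      also have "\<dots> = (\<Sum>T\<in>Pow A. ?F A md s (b, pw, mw, fl) T)"
        using Suc.IH[of s pw] Suc.prems sumA iA by (simp add: A_def)
      also have "\<dots> = (\<Sum>T\<in>Pow (Aset n (Suc d) - {i}). ?F (Aset n (Suc d)) md s (b, pw, mw, fl) T)"
        unfolding E unfolding AS using IS by simp
      finally show ?thesis .
    qed
  next
    case False
    have E: "Aset n (Suc d) - {i} = insert k (A - {i})" using AS False by auto
    have IS: "Iset md i (insert k A) = Iset md i A" using False by (auto simp: Iset_def)
    have fin1: "finite (A - {i})" "k \<notin> A - {i}" using kA by auto
    have sk: "R n l w i PW d s b pw mw fl md = (\<Sum>T\<in>Pow (A - {i}). ?F A md s (b, pw, mw, fl) T)"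
      using Suc.IH[of s pw] Suc.prems sumA by (simp add: A_def)
    have tk: "(if fl = 0 \<and> l k \<le> b then R n l w i PW d (min (s+1) n) (b - l k) (min (pw + w k) PW) (max mw (w k)) 0 md
               else R n l w i PW d (min (s+1) n) b pw (max mw (w k)) 1 md)
         = (\<Sum>T\<in>Pow (A - {i}). ?F A md (s+1) (gs l w k (b, pw, mw, fl)) T)"
    proof -
      have m1: "min (s+1) n = s + 1" using Suc.prems by simp
      show ?thesis
      proof (cases "fl = 0 \<and> l k \<le> b")
        case True
        have "min (pw + w k) PW = pw + w k" using Suc.prems(3) sumA by simp
        then show ?thesis using True Suc.IH[of "s+1" "pw + w k"] Suc.prems sumA m1
          by (simp add: A_def)
      next
        case False
        then show ?thesis using Suc.IH[of "s+1" pw] Suc.prems sumA m1 by (auto simp: A_def)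
      qed
    qed
    have "R n l w i PW (Suc d) s b pw mw fl md =
        R n l w i PW d s b pw mw fl md +
        (if fl = 0 \<and> l k \<le> b then R n l w i PW d (min (s+1) n) (b - l k) (min (pw + w k) PW) (max mw (w k)) 0 md
               else R n l w i PW d (min (s+1) n) b pw (max mw (w k)) 1 md)"
      using False by (simp add: k_def Let_def)
    also have "\<dots> = (\<Sum>T\<in>Pow (A - {i}). ?F A md s (b, pw, mw, fl) T)
       + (\<Sum>T\<in>Pow (A - {i}). ?F A md (s+1) (gs l w k (b, pw, mw, fl)) T)"
      using sk tk by simp
    also have "(\<Sum>T\<in>Pow (A - {i}). ?F A md (s+1) (gs l w k (b, pw, mw, fl)) T)
        = (\<Sum>T\<in>Pow (A - {i}). ?F (insert k A) md s (b, pw, mw, fl) (insert k T))"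
    proof (rule sum.cong[OF refl])
      fix T assume "T \<in> Pow (A - {i})"
      then have T: "T \<subseteq> A" "k \<notin> T" using kA by auto
      have IA: "Iset md i A \<subseteq> A" by (auto simp: Iset_def)
      have "insert k T \<union> Iset md i A = insert k (T \<union> Iset md i A)" by auto
      moreover have "sorted_list_of_set (insert k (T \<union> Iset md i A)) = k # sorted_list_of_set (T \<union> Iset md i A)"
      proof (rule sorted_insert_min)
        show "finite (T \<union> Iset md i A)" using fT[OF T(1)] kA IA finite_subset by blast
        show "\<forall>x\<in>T \<union> Iset md i A. k < x" using kA IA T by blast
      qed
      moreover have "card (insert k T) = Suc (card T)" using T fT by simp
      ultimately show "?F A md (s+1) (gs l w k (b, pw, mw, fl)) T = ?F (insert k A) md s (b, pw, mw, fl) (insert k T)"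
        using IS by (simp add: fin_Cons)
    qed
    also have "(\<Sum>T\<in>Pow (A - {i}). ?F A md s (b, pw, mw, fl) T) = (\<Sum>T\<in>Pow (A - {i}). ?F (insert k A) md s (b, pw, mw, fl) T)"
      using IS by simp
    also have "\<dots> + (\<Sum>T\<in>Pow (A - {i}). ?F (insert k A) md s (b, pw, mw, fl) (insert k T))
        = (\<Sum>T\<in>Pow (insert k (A - {i})). ?F (insert k A) md s (b, pw, mw, fl) T)"
      by (rule sum_Pow_insert[symmetric]) (use fin1 in auto)
    finally show ?thesis unfolding E[symmetric] AS .
  qed
qed

fun pwof :: "nat\<times>nat\<times>nat\<times>nat \<Rightarrow> nat" where "pwof (b, pw, mw, fl) = pw"
fun mwof :: "nat\<times>nat\<times>nat\<times>nat \<Rightarrow> nat" where "mwof (b, pw, mw, fl) = mw"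

lemma val_eq: "val st = max (pwof st) (mwof st)" by (cases st) auto

lemma fin_pw: "pwof (fin l w xs (b, pw, mw, fl)) = pw + (if fl = 0 then sum_list (map w (take_fit l b xs)) else 0)"
proof (induction xs arbitrary: b pw mw fl)
  case Nil then show ?case by (simp add: fin_Nil)
next
  case (Cons k xs) then show ?case by (auto simp: fin_Cons)
qed

lemma fin_mw: "mwof (fin l w xs (b, pw, mw, fl)) = Max (insert mw (w ` set xs))"
proof (induction xs arbitrary: b pw mw fl)
  case Nil then show ?case by (simp add: fin_Nil)
next
  case (Cons k xs)
  have "Max (insert (max mw (w k)) (w ` set xs)) = Max (insert mw (w ` set (k # xs)))"
  proof -
    have f: "finite (w ` set xs)" by simp
    show ?thesis using Max_insert[OF f] by (cases "xs = []") (auto simp: max.assoc max.commute max.left_commute insert_commute)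
  qed
  then show ?case using Cons by (auto simp: fin_Cons)
qed

lemma take_fit_prefix: "\<exists>ys. xs = take_fit l b xs @ ys"
  by (induction xs arbitrary: b) auto

lemma greedy_val:
  assumes "finite S"
  shows "val (fin l w (sorted_list_of_set S) (lbin, 0, 0, 0)) = sum w (greedy l w lbin S)"
proof (cases "S = {}")
  case True then show ?thesis by (simp add: fin_Nil greedy_def)
next
  case False
  define xs where "xs = sorted_list_of_set S"
  define tf where "tf = take_fit l lbin xs"
  have dx: "distinct xs" unfolding xs_def by simp
  obtain ys where "xs = tf @ ys" using take_fit_prefix unfolding tf_def by blast
  then have dtf: "distinct tf" using dx by (metis distinct_append)
  have P: "sum w (set tf) = sum_list (map w tf)" using dtf by (simp add: sum_list_distinct_conv_sum_set)
  define a where "a = max_agent w S"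
  have fin: "finite {k \<in> S. w k = Max (w ` S)}" using assms by simp
  have ne: "{k \<in> S. w k = Max (w ` S)} \<noteq> {}"
  proof -
    have "Max (w ` S) \<in> w ` S" using assms False by simp
    then show ?thesis by auto
  qed
  have "a \<in> {k \<in> S. w k = Max (w ` S)}" unfolding a_def max_agent_def using Min_in[OF fin ne] .
  then have wa: "w a = Max (w ` S)" by simp
  have M: "Max (insert 0 (w ` S)) = Max (w ` S)" using assms False
    by (simp add: Max_insert)
  have "val (fin l w xs (lbin, 0, 0, 0)) = max (sum_list (map w tf)) (Max (w ` S))"
    unfolding val_eq fin_pw fin_mw using M by (simp add: tf_def xs_def assms)
  also have "\<dots> = sum w (greedy l w lbin S)"
    unfolding greedy_def using False P wa by (simp add: Let_def tf_def xs_def a_def max_def)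
  finally show ?thesis unfolding xs_def .
qed

lemma R_top:
  assumes "i \<in> {1..n}"
  shows "real (R n l w i (sum w {1..n}) n 0 lbin 0 0 0 1) - real (R n l w i (sum w {1..n}) n 0 lbin 0 0 0 0)
     = fact n * shapley {1..n} (greedy_game l w lbin) i"
proof -
  have A: "Aset n n = {1..n}" unfolding Aset_def by auto
  let ?PW = "sum w {1..n}"
  let ?C = "\<lambda>T. fact (card T) * fact (n - 1 - card T)"
  have R1: "R n l w i ?PW n 0 lbin 0 0 0 1 = (\<Sum>T\<in>Pow ({1..n} - {i}). ?C T * sum w (greedy l w lbin (T \<union> {i})))"
  proof -
    have "R n l w i ?PW n 0 lbin 0 0 0 1 = (\<Sum>T\<in>Pow ({1..n} - {i}). ?C T *
        val (fin l w (sorted_list_of_set (T \<union> {i})) (lbin, 0, 0, 0)))"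
      using R_sum[where d=n and s=0 and pw=0 and PW="?PW" and md=1 and b=lbin and mw=0 and fl=0 and n=n and w=w and l=l and i=i] A assms by (simp add: Iset_def)
    also have "\<dots> = (\<Sum>T\<in>Pow ({1..n} - {i}). ?C T * sum w (greedy l w lbin (T \<union> {i})))"
    proof (rule sum.cong[OF refl])
      fix T assume "T \<in> Pow ({1..n} - {i})"
      then have f: "finite (T \<union> {i})" by (auto intro: finite_subset)
      show "?C T * val (fin l w (sorted_list_of_set (T \<union> {i})) (lbin, 0, 0, 0)) = ?C T * sum w (greedy l w lbin (T \<union> {i}))"
        by (simp only: greedy_val[OF f])
    qed
    finally show ?thesis .
  qed
  have R0: "R n l w i ?PW n 0 lbin 0 0 0 0 = (\<Sum>T\<in>Pow ({1..n} - {i}). ?C T * sum w (greedy l w lbin T))"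
  proof -
    have "R n l w i ?PW n 0 lbin 0 0 0 0 = (\<Sum>T\<in>Pow ({1..n} - {i}). ?C T *
        val (fin l w (sorted_list_of_set T) (lbin, 0, 0, 0)))"
      using R_sum[where d=n and s=0 and pw=0 and PW="?PW" and md=0 and b=lbin and mw=0 and fl=0 and n=n and w=w and l=l and i=i] A assms by (simp add: Iset_def)
    also have "\<dots> = (\<Sum>T\<in>Pow ({1..n} - {i}). ?C T * sum w (greedy l w lbin T))"
      by (rule sum.cong[OF refl]) (auto simp: greedy_val finite_subset)
    finally show ?thesis .
  qed
  have cN: "card {1..n} = n" by simp
  have fn: "(fact n :: real) \<noteq> 0" by simp
  have "fact n * shapley {1..n} (greedy_game l w lbin) i =
     (\<Sum>T\<in>Pow ({1..n} - {i}). real (?C T) * (real (sum w (greedy l w lbin (T \<union> {i}))) - real (sum w (greedy l w lbin T))))"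
    unfolding shapley_def sum_distrib_left cN greedy_game_def
  proof (rule sum.cong[OF refl])
    fix T assume "T \<in> Pow ({1..n} - {i})"
    have e: "n - card T - 1 = n - 1 - card T" by simp
    show "fact n * (fact (card T) * fact (n - card T - 1) / fact n *
          (real (sum w (greedy l w lbin (T \<union> {i}))) - real (sum w (greedy l w lbin T)))) =
         real (?C T) * (real (sum w (greedy l w lbin (T \<union> {i}))) - real (sum w (greedy l w lbin T)))"
      using fn unfolding e by (simp add: of_nat_mult)
  qed
  also have "\<dots> = real (R n l w i ?PW n 0 lbin 0 0 0 1) - real (R n l w i ?PW n 0 lbin 0 0 0 0)"
    unfolding R1 R0 of_nat_sum sum_subtractf[symmetric] by (simp add: algebra_simps)
  finally show ?thesis by simp
qed


lemma wp_Basic_eq: assumes "nonjump i" shows "wp (Basic i) m Q = Q (mexec i m) 1"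
proof
  assume "wp (Basic i) m Q" then show "Q (mexec i m) 1" unfolding wp_def by (auto elim: big.cases)
next
  assume "Q (mexec i m) 1" then show "wp (Basic i) m Q" unfolding wp_def using bBasic[OF assms, of m] by blast
qed

lemma wp_Seq_eq: "wp (Seq a b) m Q = wp a m (\<lambda>m1 t1. wp b m1 (\<lambda>m2 t2. Q m2 (t1+t2)))"
  unfolding wp_def by (auto intro: big.intros elim: big.cases) (blast elim: big.cases)

lemma wp_If_eq: "wp (If c a b) m Q = (if holds c m then wp a m (\<lambda>m' t. Q m' (Suc t)) else wp b m (\<lambda>m' t. Q m' (t+2)))"
proof (cases "holds c m")
  case True
  show ?thesis
  proof
    assume "wp (If c a b) m Q"
    then obtain m' t where "big (If c a b) m m' t" "Q m' t" unfolding wp_def by blast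
    then show "(if holds c m then wp a m (\<lambda>m' t. Q m' (Suc t)) else wp b m (\<lambda>m' t. Q m' (t+2)))"
      using True unfolding wp_def by (cases rule: big.cases) auto
  next
    assume "(if holds c m then wp a m (\<lambda>m' t. Q m' (Suc t)) else wp b m (\<lambda>m' t. Q m' (t+2)))"
    then show "wp (If c a b) m Q" using True unfolding wp_def by (auto intro: bIfT)
  qed
next
  case False
  show ?thesis
  proof
    assume "wp (If c a b) m Q"
    then obtain m' t where "big (If c a b) m m' t" "Q m' t" unfolding wp_def by blast
    then show "(if holds c m then wp a m (\<lambda>m' t. Q m' (Suc t)) else wp b m (\<lambda>m' t. Q m' (t+2)))"
      using False unfolding wp_def by (cases rule: big.cases) auto
  next
    assume "(if holds c m then wp a m (\<lambda>m' t. Q m' (Suc t)) else wp b m (\<lambda>m' t. Q m' (t+2)))"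
    then obtain m' t where "big b m m' t" "Q m' (t+2)" using False unfolding wp_def by auto
    then show "wp (If c a b) m Q" using False bIfF[of c m b m' t a] unfolding wp_def by blast
  qed
qed

lemma wp_SeqI: "wp a m P \<Longrightarrow> (\<And>m1 t1. P m1 t1 \<Longrightarrow> wp b m1 (\<lambda>m2 t2. Q m2 (t1+t2))) \<Longrightarrow> wp (Seq a b) m Q"
  unfolding wp_Seq_eq by (rule wp_mono)

definition agree :: "nat set \<Rightarrow> (nat \<Rightarrow> int) \<Rightarrow> (nat \<Rightarrow> int) \<Rightarrow> bool" where
  "agree W m' m \<longleftrightarrow> (\<forall>a. a \<notin> W \<longrightarrow> m' a = m a)"

lemma mexec_simps[simp]:
  "mexec (LoadConst d c) m = m(d := c)"
  "mexec (Add d a b) m = m(d := m a + m b)"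
  "mexec (Sub d a b) m = m(d := m a - m b)"
  "mexec (Mul d a b) m = m(d := m a * m b)"
  "mexec (Div d a b) m = m(d := m a div m b)"
  "mexec (Load d s) m = m(d := m (nat (m s)))"
  "mexec (Store d s) m = m(nat (m d) := m s)"
  by (simp_all add: mexec_def)

fun SEQ :: "com list \<Rightarrow> com" where
  "SEQ [] = Basic (LoadConst 19 0)"
| "SEQ [c] = c"
| "SEQ (c # cs) = Seq c (SEQ cs)"

abbreviation "B i \<equiv> Basic i"
abbreviation "MOV d a \<equiv> Basic (Add d a 1)"
abbreviation "SKIP \<equiv> Basic (LoadConst 19 0)"

definition FIT :: com where
  "FIT = SEQ [MOV 60 63, B (Add 61 38 53), B (Sub 63 6 61), If (CNeg 63) (MOV 61 6) SKIP, B (LoadConst 62 0)]"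
definition STOP :: com where
  "STOP = SEQ [MOV 60 40, MOV 61 38, B (LoadConst 62 1)]"

definition LEAF :: com where
  "LEAF = SEQ [B (Add 45 8 42), B (Load 46 45),
     B (Sub 47 3 42), B (Sub 47 47 2), If (CNeg 47) (MOV 47 1) SKIP,
     B (Add 45 8 47), B (Load 48 45),
     B (Sub 49 38 36), If (CNeg 49) (MOV 49 36) (MOV 49 38),
     B (Mul 46 46 48), B (Mul 46 46 49)]"

definition NLa :: com where
  "NLa = SEQ [B (Add 50 43 2),
     B (Add 51 50 50), B (Add 51 51 0), B (Add 51 51 2), B (Load 52 51),
     B (Add 51 51 2), B (Load 53 51),
     B (Add 54 9 30), B (Add 54 54 14), B (Load 55 54)]"
definition NLb :: com where
  "NLb = SEQ [B (Add 56 42 2), B (Sub 57 3 56), If (CNeg 57) (MOV 56 3) SKIP,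
     B (Sub 57 50 5), If (CZero 57) (If (CZero 31) SKIP (MOV 56 42)) SKIP]"
definition NLc :: com where
  "NLc = SEQ [B (Sub 59 36 53), If (CNeg 59) (MOV 58 53) (MOV 58 36)]"
definition NLd :: com where
  "NLd = If (CZero 34) (Seq (B (Sub 63 40 52)) (If (CNeg 63) STOP FIT)) STOP"
definition NLe :: com where
  "NLe = SEQ [B (Mul 65 56 11), B (Add 65 65 60), B (Mul 65 65 12), B (Add 65 65 61), B (Mul 65 65 13), B (Add 65 65 58),
     B (Mul 65 65 20), B (Add 65 65 62), B (Mul 65 65 20), B (Add 65 65 31),
     B (Mul 66 50 14), B (Add 65 65 66), B (Add 65 65 9), B (Load 67 65)]"
definition NLf :: com where
  "NLf = SEQ [B (Sub 68 50 5), If (CZero 68) (If (CZero 31) (MOV 46 55) (MOV 46 67)) (B (Add 46 55 67))]"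
definition NONLEAF :: com where
  "NONLEAF = SEQ [NLa, NLb, NLc, NLd, NLe, NLf]"

definition DEC :: com where
  "DEC = SEQ [MOV 30 15, B (LoadConst 20 2),
     B (Div 32 30 20), B (Mul 33 32 20), B (Sub 31 30 33),
     B (Div 35 32 20), B (Mul 33 35 20), B (Sub 34 32 33),
     B (Div 37 35 13), B (Mul 33 37 13), B (Sub 36 35 33),
     B (Div 39 37 12), B (Mul 33 39 12), B (Sub 38 37 33),
     B (Div 41 39 11), B (Mul 33 41 11), B (Sub 40 39 33),
     B (Div 43 41 10), B (Mul 33 43 10), B (Sub 42 41 33),
     B (Sub 44 3 43), B (Sub 44 44 2)]"

definition BODY :: com where
  "BODY = SEQ [DEC, If (CNeg 44) LEAF NONLEAF, B (Add 69 9 30), B (Store 69 46), B (Sub 15 15 2)]"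

definition dec :: "nat \<Rightarrow> nat \<Rightarrow> nat \<Rightarrow> nat \<Rightarrow> nat \<Rightarrow> nat \<times> nat \<times> nat \<times> nat \<times> nat \<times> nat \<times> nat" where
  "dec M1 P1 L1 S1 x = (let md = x mod 2; x1 = x div 2; fl = x1 mod 2; x2 = x1 div 2; mw = x2 mod M1; x3 = x2 div M1;
     pw = x3 mod P1; x4 = x3 div P1; b = x4 mod L1; x5 = x4 div L1; s = x5 mod S1; p = x5 div S1
     in (p, s, b, pw, mw, fl, md))"

fun enc :: "nat \<Rightarrow> nat \<Rightarrow> nat \<Rightarrow> nat \<Rightarrow> nat \<times> nat \<times> nat \<times> nat \<times> nat \<times> nat \<times> nat \<Rightarrow> nat" where
  "enc M1 P1 L1 S1 (p, s, b, pw, mw, fl, md) = ((((((p*S1 + s)*L1 + b)*P1 + pw)*M1 + mw)*2 + fl)*2 + md)"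

lemma enc_dec: "enc M1 P1 L1 S1 (dec M1 P1 L1 S1 x) = x"
  by (simp add: dec_def Let_def add.commute mult.commute)

lemma dm: "(c::nat) < Q \<Longrightarrow> (a*Q + c) div Q = a \<and> (a*Q+c) mod Q = c"
  by simp

lemma dec_enc: assumes "s < S1" "b < L1" "pw < P1" "mw < M1" "fl < 2" "md < 2" shows
  "dec M1 P1 L1 S1 (enc M1 P1 L1 S1 (p, s, b, pw, mw, fl, md)) = (p, s, b, pw, mw, fl, md)"
proof -
  define y5 where "y5 = p*S1 + s"
  define y4 where "y4 = y5*L1 + b"
  define y3 where "y3 = y4*P1 + pw"
  define y2 where "y2 = y3*M1 + mw"
  define y1 where "y1 = y2*2 + fl"
  define y0 where "y0 = y1*2 + md"
  have e: "enc M1 P1 L1 S1 (p, s, b, pw, mw, fl, md) = y0" unfolding y0_def y1_def y2_def y3_def y4_def y5_def by simp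
  have "y0 div 2 = y1" "y0 mod 2 = md" unfolding y0_def using dm[OF assms(6)] by auto
  moreover have "y1 div 2 = y2" "y1 mod 2 = fl" unfolding y1_def using dm[OF assms(5)] by auto
  moreover have "y2 div M1 = y3" "y2 mod M1 = mw" unfolding y2_def using dm[OF assms(4)] by auto
  moreover have "y3 div P1 = y4" "y3 mod P1 = pw" unfolding y3_def using dm[OF assms(3)] by auto
  moreover have "y4 div L1 = y5" "y4 mod L1 = b" unfolding y4_def using dm[OF assms(2)] by auto
  moreover have "y5 div S1 = p" "y5 mod S1 = s" unfolding y5_def using dm[OF assms(1)] by auto
  ultimately show ?thesis unfolding e dec_def Let_def by simp
qed


lemma zdiv_nat: "int a div int b = int (a div b)" by (simp add: zdiv_int)
lemma zmod_nat: "int a - int (a div b) * int b = int (a mod b)"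
  by (metis minus_div_mult_eq_mod of_nat_mult zmod_int zdiv_int)
lemma zdiv2: "int a div 2 = int (a div 2)" by simp
lemma zmod2: "int a - int (a div 2) * 2 = int (a mod 2)" using zmod_nat[of a 2] by simp

definition frame :: "(nat \<Rightarrow> int) \<Rightarrow> (nat \<Rightarrow> int) \<Rightarrow> bool" where
  "frame m' m \<longleftrightarrow> (\<forall>a. (a < 19 \<or> 128 \<le> a) \<longrightarrow> m' a = m a)"

lemma DEC_spec:
  assumes "m 15 = int x" "m 13 = int M1" "m 12 = int P1" "m 11 = int L1" "m 10 = int S1"
    "m 3 = int n" "m 2 = 1" "m 1 = 0"
  shows "wp DEC m (\<lambda>m' t. t = 22 \<and> frame m' m \<and> m' 30 = int x \<and> m' 20 = 2 \<and>
     m' 31 = int (x mod 2) \<and> m' 34 = int (x div 2 mod 2) \<and> m' 36 = int (x div 2 div 2 mod M1) \<and>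
     m' 38 = int (x div 2 div 2 div M1 mod P1) \<and> m' 40 = int (x div 2 div 2 div M1 div P1 mod L1) \<and>
     m' 42 = int (x div 2 div 2 div M1 div P1 div L1 mod S1) \<and> m' 43 = int (x div 2 div 2 div M1 div P1 div L1 div S1) \<and>
     m' 44 = int n - int (x div 2 div 2 div M1 div P1 div L1 div S1) - 1)"
  unfolding DEC_def using assms
  by (simp add: wp_Seq_eq wp_Basic_eq zdiv_nat zmod_nat zdiv2 zmod2 frame_def)


lemma natadd: "nat (int a + int b) = a + b" by simp

lemma NLa_spec:
  assumes "m 43 = int p" "m 2 = 1" "m 0 = int Bb" "m 9 = int Tb" "m 30 = int x" "m 14 = int SZ"
    "128 \<le> Bb" "128 \<le> Tb"
    "m (Bb + 2*Suc p + 1) = int lk" "m (Bb + 2*Suc p + 2) = int wk" "m (Tb + x + SZ) = int vs"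
  shows "wp NLa m (\<lambda>m' t. t = 10 \<and> agree {50..55} m' m \<and> m' 50 = int (Suc p) \<and> m' 52 = int lk \<and> m' 53 = int wk \<and> m' 55 = int vs)"
proof -
  have e1: "nat (3 + (2 * int p + int Bb)) = Suc (Suc (Suc (Bb + 2 * p)))" by simp
  have e2: "nat (4 + (2 * int p + int Bb)) = Suc (Suc (Suc (Suc (Bb + 2 * p))))" by simp
  have e3: "nat (int Tb + int x + int SZ) = Tb + x + SZ" by simp
  show ?thesis unfolding NLa_def using assms
    by (auto simp add: wp_Seq_eq wp_Basic_eq agree_def nat_eq_iff e1 e2 e3)
qed

lemma NLb_spec:
  assumes "m 42 = int s" "m 3 = int n" "m 50 = int k" "m 5 = int i" "m 31 = int md" "m 2 = 1" "m 1 = 0" "md \<le> 1"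
  shows "wp NLb m (\<lambda>m' t. t \<le> 12 \<and> agree {19,56,57} m' m \<and> m' 56 = int (if k = i \<and> md = 1 then s else min (s+1) n))"
  unfolding NLb_def using assms
  by (auto simp add: wp_Seq_eq wp_Basic_eq wp_If_eq agree_def)

lemma NLc_spec:
  assumes "m 36 = int mw" "m 53 = int wk" "m 1 = 0"
  shows "wp NLc m (\<lambda>m' t. t \<le> 5 \<and> agree {58,59} m' m \<and> m' 58 = int (max mw wk))"
  unfolding NLc_def using assms
  by (auto simp add: wp_Seq_eq wp_Basic_eq wp_If_eq agree_def)

lemma NLd_spec:
  assumes "m 34 = int fl" "m 40 = int b" "m 52 = int lk" "m 38 = int pw" "m 53 = int wk" "m 6 = int PW" "m 1 = 0"
  shows "wp NLd m (\<lambda>m' t. t \<le> 15 \<and> agree {19,60,61,62,63} m' m \<and>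
     m' 60 = int (if fl = 0 \<and> lk \<le> b then b - lk else b) \<and>
     m' 61 = int (if fl = 0 \<and> lk \<le> b then min (pw+wk) PW else pw) \<and>
     m' 62 = int (if fl = 0 \<and> lk \<le> b then 0 else 1))"
  unfolding NLd_def STOP_def FIT_def using assms
  by (auto simp add: wp_Seq_eq wp_Basic_eq wp_If_eq agree_def)

lemma NLe_spec:
  assumes "m 56 = int s'" "m 11 = int L1" "m 60 = int b'" "m 12 = int P1" "m 61 = int pw'" "m 13 = int M1"
    "m 58 = int mw'" "m 20 = 2" "m 62 = int fl'" "m 31 = int md" "m 50 = int k" "m 14 = int SZ" "m 9 = int Tb"
    "128 \<le> Tb" "SZ = S1*L1*P1*M1*4"
    "m (Tb + enc M1 P1 L1 S1 (k, s', b', pw', mw', fl', md)) = int vt"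
  shows "wp NLe m (\<lambda>m' t. t = 14 \<and> agree {65,66,67} m' m \<and> m' 67 = int vt)"
proof -
  have E: "4 * (((int s' * int L1 + int b') * int P1 + int pw') * int M1) + 4 * int mw' + int fl' * 2 + int md
      + int k * (int S1 * int L1 * int P1 * int M1 * 4) + int Tb = int (Tb + enc M1 P1 L1 S1 (k, s', b', pw', mw', fl', md))"
    by (simp add: algebra_simps)
  show ?thesis unfolding NLe_def using assms
    by (auto simp add: wp_Seq_eq wp_Basic_eq agree_def nat_eq_iff E natadd simp del: enc.simps)
qed

lemma NLf_spec:
  assumes "m 50 = int k" "m 5 = int i" "m 31 = int md" "m 55 = int vs" "m 67 = int vt" "m 1 = 0"
  shows "wp NLf m (\<lambda>m' t. t \<le> 5 \<and> agree {46,68} m' m \<and> m' 46 = int (if k = i then (if md = 0 then vs else vt) else vs + vt))"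
  unfolding NLf_def using assms
  by (auto simp add: wp_Seq_eq wp_Basic_eq wp_If_eq agree_def)

lemma NONLEAF_spec:
  assumes R: "m 0 = int Bb" "m 1 = 0" "m 2 = 1" "m 3 = int n" "m 5 = int i" "m 6 = int PW" "m 9 = int Tb"
    "m 11 = int L1" "m 12 = int P1" "m 13 = int M1" "m 14 = int SZ" "m 20 = 2" "m 30 = int x" "m 31 = int md"
    "m 34 = int fl" "m 36 = int mw" "m 38 = int pw" "m 40 = int b" "m 42 = int s" "m 43 = int p"
    and C: "md \<le> 1" "128 \<le> Bb" "128 \<le> Tb" "SZ = S1*L1*P1*M1*4"
    and D: "m (Bb + 2*Suc p + 1) = int lk" "m (Bb + 2*Suc p + 2) = int wk" "m (Tb + x + SZ) = int vs"
    "m (Tb + enc M1 P1 L1 S1 (Suc p, if Suc p = i \<and> md = 1 then s else min (s+1) n,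
         if fl = 0 \<and> lk \<le> b then b - lk else b, if fl = 0 \<and> lk \<le> b then min (pw+wk) PW else pw,
         max mw wk, if fl = 0 \<and> lk \<le> b then 0 else 1, md)) = int vt"
  shows "wp NONLEAF m (\<lambda>m' t. t \<le> 61 \<and> agree ({19,46} \<union> {50..69}) m' m \<and>
     m' 46 = int (if Suc p = i then (if md = 0 then vs else vt) else vs + vt))"
proof -
  have A: "wp NLa m (\<lambda>m' t. t = 10 \<and> agree {50..55} m' m \<and> m' 50 = int (Suc p) \<and> m' 52 = int lk \<and> m' 53 = int wk \<and> m' 55 = int vs)"
    by (rule NLa_spec) (use R C D in auto)
  show ?thesis unfolding NONLEAF_def SEQ.simps
  proof (rule wp_SeqI[OF A])
    fix m1 and t1 :: nat assume H1: "t1 = 10 \<and> agree {50..55} m1 m \<and> m1 50 = int (Suc p) \<and> m1 52 = int lk \<and> m1 53 = int wk \<and> m1 55 = int vs"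
    have B: "wp NLb m1 (\<lambda>m' t. t \<le> 12 \<and> agree {19,56,57} m' m1 \<and> m' 56 = int (if Suc p = i \<and> md = 1 then s else min (s+1) n))"
      by (rule NLb_spec) (use H1 R C in \<open>auto simp: agree_def\<close>)
    show "wp (Seq NLb (Seq NLc (Seq NLd (Seq NLe NLf)))) m1 (\<lambda>m2 t2. t1 + t2 \<le> 61 \<and> agree ({19,46} \<union> {50..69}) m2 m \<and>
     m2 46 = int (if Suc p = i then (if md = 0 then vs else vt) else vs + vt))"
    proof (rule wp_SeqI[OF B])
      fix m2 and t2 :: nat assume H2: "t2 \<le> 12 \<and> agree {19,56,57} m2 m1 \<and> m2 56 = int (if Suc p = i \<and> md = 1 then s else min (s+1) n)"
      have Cc: "wp NLc m2 (\<lambda>m' t. t \<le> 5 \<and> agree {58,59} m' m2 \<and> m' 58 = int (max mw wk))"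
        by (rule NLc_spec) (use H1 H2 R C in \<open>auto simp: agree_def\<close>)
      show "wp (Seq NLc (Seq NLd (Seq NLe NLf))) m2 (\<lambda>m3 t3. t1 + (t2 + t3) \<le> 61 \<and> agree ({19,46} \<union> {50..69}) m3 m \<and>
         m3 46 = int (if Suc p = i then (if md = 0 then vs else vt) else vs + vt))"
      proof (rule wp_SeqI[OF Cc])
        fix m3 and t3 :: nat assume H3: "t3 \<le> 5 \<and> agree {58,59} m3 m2 \<and> m3 58 = int (max mw wk)"
        have Dd: "wp NLd m3 (\<lambda>m' t. t \<le> 15 \<and> agree {19,60,61,62,63} m' m3 \<and>
             m' 60 = int (if fl = 0 \<and> lk \<le> b then b - lk else b) \<and>
             m' 61 = int (if fl = 0 \<and> lk \<le> b then min (pw+wk) PW else pw) \<and>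
             m' 62 = int (if fl = 0 \<and> lk \<le> b then 0 else 1))"
          by (rule NLd_spec) (use H1 H2 H3 R C in \<open>auto simp: agree_def\<close>)
        show "wp (Seq NLd (Seq NLe NLf)) m3 (\<lambda>m4 t4. t1 + (t2 + (t3 + t4)) \<le> 61 \<and> agree ({19,46} \<union> {50..69}) m4 m \<and>
           m4 46 = int (if Suc p = i then (if md = 0 then vs else vt) else vs + vt))"
        proof (rule wp_SeqI[OF Dd])
          fix m4 and t4 :: nat assume H4: "t4 \<le> 15 \<and> agree {19,60,61,62,63} m4 m3 \<and>
             m4 60 = int (if fl = 0 \<and> lk \<le> b then b - lk else b) \<and>
             m4 61 = int (if fl = 0 \<and> lk \<le> b then min (pw+wk) PW else pw) \<and>
             m4 62 = int (if fl = 0 \<and> lk \<le> b then 0 else 1)"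
          have ag4: "agree ({19} \<union> {50..63}) m4 m" using H1 H2 H3 H4 unfolding agree_def by auto
          have Ee: "wp NLe m4 (\<lambda>m' t. t = 14 \<and> agree {65,66,67} m' m4 \<and> m' 67 = int vt)"
          proof (rule NLe_spec)
            show "m4 (Tb + enc M1 P1 L1 S1 (Suc p, if Suc p = i \<and> md = 1 then s else min (s+1) n,
              if fl = 0 \<and> lk \<le> b then b - lk else b, if fl = 0 \<and> lk \<le> b then min (pw+wk) PW else pw,
              max mw wk, if fl = 0 \<and> lk \<le> b then 0 else 1, md)) = int vt"
              using ag4 D(4) C unfolding agree_def by auto
          qed (use H1 H2 H3 H4 R C in \<open>auto simp: agree_def\<close>)
          show "wp (Seq NLe NLf) m4 (\<lambda>m5 t5. t1 + (t2 + (t3 + (t4 + t5))) \<le> 61 \<and> agree ({19,46} \<union> {50..69}) m5 m \<and>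
             m5 46 = int (if Suc p = i then (if md = 0 then vs else vt) else vs + vt))"
          proof (rule wp_SeqI[OF Ee])
            fix m5 and t5 :: nat assume H5: "t5 = 14 \<and> agree {65,66,67} m5 m4 \<and> m5 67 = int vt"
            have Ff: "wp NLf m5 (\<lambda>m' t. t \<le> 5 \<and> agree {46,68} m' m5 \<and> m' 46 = int (if Suc p = i then (if md = 0 then vs else vt) else vs + vt))"
              by (rule NLf_spec) (use H1 H2 H3 H4 H5 R C in \<open>auto simp: agree_def\<close>)
            show "wp NLf m5 (\<lambda>m6 t6. t1 + (t2 + (t3 + (t4 + (t5 + t6)))) \<le> 61 \<and> agree ({19,46} \<union> {50..69}) m6 m \<and>
             m6 46 = int (if Suc p = i then (if md = 0 then vs else vt) else vs + vt))"
              by (rule wp_mono[OF Ff]) (use H1 H2 H3 H4 H5 ag4 in \<open>auto simp: agree_def\<close>)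
          qed
        qed
      qed
    qed
  qed
qed


lemma LEAF_agree:
  assumes "m 3 = int n" "m 8 = int Fb" "m 42 = int s" "m 38 = int pw" "m 36 = int mw" "m 2 = 1" "m 1 = 0"
    "\<forall>t\<le>n. m (Fb + t) = int (fact t)" "s \<le> n" "128 \<le> Fb"
  shows "wp LEAF m (\<lambda>m' t. t \<le> 20 \<and> agree {19,45,46,47,48,49} m' m \<and> m' 46 = int (fact s * fact (n - 1 - s) * max pw mw))"
proof -
  have f1: "m (Fb + s) = int (fact s)" using assms by auto
  have f2: "m (Fb + (n - 1 - s)) = int (fact (n - 1 - s))" using assms by auto
  have f0: "m Fb = 1" using assms(8) by (metis add_0_right fact_0 of_nat_1 zero_le)
  have n1: "nat (int Fb + int s) = Fb + s" by simp
  have n2: "s < n \<Longrightarrow> int n - int s - 1 = int (n - 1 - s)" by simp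
  have n3: "\<And>a b. nat (int a + int b) = a + b" by simp
  have f3: "m (Fb + (n - Suc s)) = int (fact (n - Suc s))" using assms by auto
  have f4: "s < n \<Longrightarrow> m (Fb + n - Suc s) = int (fact (n - Suc s))" using f3 by simp
  show ?thesis
  unfolding LEAF_def using assms f1 f2 f0 f3 f4
  by (auto simp add: wp_Seq_eq wp_Basic_eq wp_If_eq agree_def nat_eq_iff max_def n1 n2 n3 simp del: of_nat_diff)
qed

definition Rx :: "nat \<Rightarrow> (nat\<Rightarrow>nat) \<Rightarrow> (nat\<Rightarrow>nat) \<Rightarrow> nat \<Rightarrow> nat \<Rightarrow> nat \<Rightarrow> nat \<Rightarrow> nat \<Rightarrow> nat \<Rightarrow> nat \<Rightarrow> nat" where
  "Rx n l w i PW M1 P1 L1 S1 x = (case dec M1 P1 L1 S1 x of (p,s,b,pw,mw,fl,md) \<Rightarrow> R n l w i PW (n - p) s b pw mw fl md)"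

lemma Rx_enc: "s < S1 \<Longrightarrow> b < L1 \<Longrightarrow> pw < P1 \<Longrightarrow> mw < M1 \<Longrightarrow> fl < 2 \<Longrightarrow> md < 2 \<Longrightarrow>
  Rx n l w i PW M1 P1 L1 S1 (enc M1 P1 L1 S1 (p,s,b,pw,mw,fl,md)) = R n l w i PW (n-p) s b pw mw fl md"
  unfolding Rx_def by (subst dec_enc) auto

lemma mr: "(a::nat) < A \<Longrightarrow> c < C \<Longrightarrow> a*C + c < A*C"
proof -
  assume "a < A" "c < C"
  then have "a*C + c < a*C + C" by simp
  also have "\<dots> = (a+1)*C" by simp
  also have "\<dots> \<le> A*C" using \<open>a < A\<close> by (intro mult_right_mono) auto
  finally show ?thesis .
qed

lemma enc_split: "SZ = S1*L1*P1*M1*4 \<Longrightarrow> s < S1 \<Longrightarrow> b < L1 \<Longrightarrow> pw < P1 \<Longrightarrow> mw < M1 \<Longrightarrow> fl < 2 \<Longrightarrow> md < 2 \<Longrightarrow>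
  p * SZ \<le> enc M1 P1 L1 S1 (p,s,b,pw,mw,fl,md) \<and> enc M1 P1 L1 S1 (p,s,b,pw,mw,fl,md) < (p+1) * SZ
  \<and> enc M1 P1 L1 S1 (p,s,b,pw,mw,fl,md) = p * SZ + enc M1 P1 L1 S1 (0,s,b,pw,mw,fl,md)"
proof -
  assume SZ: "SZ = S1*L1*P1*M1*4" and r: "s < S1" "b < L1" "pw < P1" "mw < M1" "fl < 2" "md < 2"
  have "s*L1 + b < S1*L1" using mr r by blast
  then have "(s*L1 + b)*P1 + pw < S1*L1*P1" using mr r by blast
  then have "((s*L1 + b)*P1 + pw)*M1 + mw < S1*L1*P1*M1" using mr r by blast
  then have "(((s*L1 + b)*P1 + pw)*M1 + mw)*2 + fl < S1*L1*P1*M1*2" using mr r by blast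
  then have "((((s*L1 + b)*P1 + pw)*M1 + mw)*2 + fl)*2 + md < S1*L1*P1*M1*2*2" using mr r by blast
  then have lt: "enc M1 P1 L1 S1 (0,s,b,pw,mw,fl,md) < SZ" using SZ by simp
  have eq: "enc M1 P1 L1 S1 (p,s,b,pw,mw,fl,md) = p * SZ + enc M1 P1 L1 S1 (0,s,b,pw,mw,fl,md)"
    using SZ by (simp add: algebra_simps)
  show ?thesis using lt eq by simp
qed

definition Stat :: "nat \<Rightarrow> nat \<Rightarrow> (nat\<Rightarrow>nat) \<Rightarrow> (nat\<Rightarrow>nat) \<Rightarrow> nat \<Rightarrow> nat \<Rightarrow> nat \<Rightarrow> (nat \<Rightarrow> int) \<Rightarrow> bool" where
  "Stat n lbin l w i PW MW m \<longleftrightarrow> m 0 = int (128*n) \<and> m 1 = 0 \<and> m 2 = 1 \<and> m 3 = int n \<and> m 4 = int lbin \<and>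
     m 5 = int i \<and> m 6 = int PW \<and> m 7 = int MW \<and> m 8 = int (192*n) \<and> m 9 = int (256*n) \<and>
     m 10 = int (n+1) \<and> m 11 = int (lbin+1) \<and> m 12 = int (PW+1) \<and> m 13 = int (MW+1) \<and>
     m 14 = int ((n+1)*(lbin+1)*(PW+1)*(MW+1)*4) \<and>
     (\<forall>k\<in>{1..n}. m (128*n + 2*k + 1) = int (l k) \<and> m (128*n + 2*k + 2) = int (w k)) \<and>
     (\<forall>t\<le>n. m (192*n + t) = int (fact t))"

lemma BODY_spec:
  fixes n lbin PW MW :: nat
  assumes St: "Stat n lbin l w i PW MW m" and n1: "1 \<le> n" and wle: "\<forall>k\<in>{1..n}. w k \<le> MW"
    and SS: "S1 = n+1" "L1 = lbin+1" "P1 = PW+1" "M1 = MW+1" "SZ = S1*L1*P1*M1*4"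
    and x: "m 15 = int x" "x < S1 * SZ"
    and tab: "\<forall>y. x < y \<and> y < S1*SZ \<longrightarrow> m (256*n + y) = int (Rx n l w i PW M1 P1 L1 S1 y)"
  shows "wp BODY m (\<lambda>m' t. t \<le> 100 \<and> m' 15 = int x - 1 \<and> m' (256*n + x) = int (Rx n l w i PW M1 P1 L1 S1 x) \<and>
     (\<forall>a. ((a < 19 \<and> a \<noteq> 15) \<or> (128 \<le> a \<and> a \<noteq> 256*n + x)) \<longrightarrow> m' a = m a))"
proof -
  let ?Rx = "Rx n l w i PW M1 P1 L1 S1"
  obtain p s b pw mw fl md where dx: "dec M1 P1 L1 S1 x = (p,s,b,pw,mw,fl,md)" by (cases "dec M1 P1 L1 S1 x") auto
  have comps: "md = x mod 2" "fl = x div 2 mod 2" "mw = x div 2 div 2 mod M1" "pw = x div 2 div 2 div M1 mod P1"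
     "b = x div 2 div 2 div M1 div P1 mod L1" "s = x div 2 div 2 div M1 div P1 div L1 mod S1"
     "p = x div 2 div 2 div M1 div P1 div L1 div S1"
    using dx by (auto simp: dec_def Let_def)
  have pos: "0 < M1" "0 < P1" "0 < L1" "0 < S1" using SS by simp_all
  have rng: "md < 2" "fl < 2" "mw < M1" "pw < P1" "b < L1" "s < S1" using pos unfolding comps by auto
  have xenc: "x = enc M1 P1 L1 S1 (p,s,b,pw,mw,fl,md)" using enc_dec[of M1 P1 L1 S1 x] dx by simp
  note es = enc_split[OF SS(5) rng(6) rng(5) rng(4) rng(3) rng(2) rng(1), of p]
  have "p * SZ < S1 * SZ" using es xenc x(2) by linarith
  then have pS: "p < S1" by (simp add: mult_less_cancel2)
  have Rxx: "?Rx x = R n l w i PW (n - p) s b pw mw fl md" unfolding Rx_def dx by simp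
  from St have S: "m 0 = int (128*n)" "m 1 = 0" "m 2 = 1" "m 3 = int n" "m 4 = int lbin"
     "m 5 = int i" "m 6 = int PW" "m 7 = int MW" "m 8 = int (192*n)" "m 9 = int (256*n)"
     "m 10 = int S1" "m 11 = int L1" "m 12 = int P1" "m 13 = int M1" "m 14 = int SZ"
     and Sd: "\<forall>k\<in>{1..n}. m (128*n + 2*k + 1) = int (l k) \<and> m (128*n + 2*k + 2) = int (w k)"
     and Sf: "\<forall>t\<le>n. m (192*n + t) = int (fact t)"
    unfolding Stat_def using SS by auto
  have D: "wp DEC m (\<lambda>m' t. t = 22 \<and> frame m' m \<and> m' 30 = int x \<and> m' 20 = 2 \<and>
     m' 31 = int md \<and> m' 34 = int fl \<and> m' 36 = int mw \<and> m' 38 = int pw \<and> m' 40 = int b \<and>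
     m' 42 = int s \<and> m' 43 = int p \<and> m' 44 = int n - int p - 1)"
    unfolding comps by (rule DEC_spec) (use S x in auto)
  show ?thesis unfolding BODY_def SEQ.simps
  proof (rule wp_SeqI[OF D])
    fix m1 and t1 :: nat
    assume H1: "t1 = 22 \<and> frame m1 m \<and> m1 30 = int x \<and> m1 20 = 2 \<and>
     m1 31 = int md \<and> m1 34 = int fl \<and> m1 36 = int mw \<and> m1 38 = int pw \<and> m1 40 = int b \<and>
     m1 42 = int s \<and> m1 43 = int p \<and> m1 44 = int n - int p - 1"
    have fr1: "\<And>a. a < 19 \<or> 128 \<le> a \<Longrightarrow> m1 a = m a" using H1 unfolding frame_def by blast
    have S1': "m1 0 = int (128*n)" "m1 1 = 0" "m1 2 = 1" "m1 3 = int n" "m1 5 = int i" "m1 6 = int PW"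
      "m1 8 = int (192*n)" "m1 9 = int (256*n)"
      "m1 11 = int L1" "m1 12 = int P1" "m1 13 = int M1" "m1 14 = int SZ" "m1 15 = int x"
      using S x fr1 by auto
    have IFP: "wp (If (CNeg 44) LEAF NONLEAF) m1 (\<lambda>m2 t2. t2 \<le> 63 \<and> agree ({19} \<union> {45..69}) m2 m1 \<and> m2 46 = int (?Rx x))"
    proof (cases "p < n")
      case False
      then have pn: "p = n" using pS SS by simp
      have hc: "holds (CNeg 44) m1" using H1 pn by simp
      have L: "wp LEAF m1 (\<lambda>m' t. t \<le> 20 \<and> agree {19,45,46,47,48,49} m' m1 \<and> m' 46 = int (fact s * fact (n - 1 - s) * max pw mw))"
      proof (rule LEAF_agree)
        show "\<forall>t\<le>n. m1 (192*n + t) = int (fact t)" using Sf fr1 n1 by auto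
        show "s \<le> n" using rng SS by simp
      qed (use H1 S1' n1 in auto)
      have "wp LEAF m1 (\<lambda>m' t. Suc t \<le> 63 \<and> agree ({19} \<union> {45..69}) m' m1 \<and> m' 46 = int (?Rx x))"
        by (rule wp_mono[OF L]) (auto simp: agree_def Rxx pn)
      then show ?thesis unfolding wp_If_eq using hc by simp
    next
      case True
      have hc: "\<not> holds (CNeg 44) m1" using H1 True by simp
      define k where "k = Suc p"
      have kN: "k \<in> {1..n}" using True k_def by simp
      define s' where "s' = (if Suc p = i \<and> md = 1 then s else min (s+1) n)"
      define fit where "fit = (fl = 0 \<and> l k \<le> b)"
      define b' where "b' = (if fit then b - l k else b)"
      define pw' where "pw' = (if fit then min (pw + w k) PW else pw)"
      define mw' where "mw' = max mw (w k)"
      define fl' where "fl' = (if fit then 0 else (1::nat))"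
      define y' where "y' = enc M1 P1 L1 S1 (Suc p, s', b', pw', mw', fl', md)"
      have wk: "w k \<le> MW" using wle kN by blast
      have r': "s' < S1" "b' < L1" "pw' < P1" "mw' < M1" "fl' < 2"
        using rng SS(1-4) wk unfolding s'_def b'_def pw'_def mw'_def fl'_def by auto
      note es' = enc_split[OF SS(5) r' rng(1), of "Suc p"]
      have y'bd: "x < y'" "y' < S1 * SZ"
      proof -
        show "x < y'" using es es' xenc unfolding y'_def by (simp add: algebra_simps; linarith)
        have "(Suc p + 1) * SZ \<le> S1 * SZ" using True SS by (intro mult_right_mono) auto
        then show "y' < S1 * SZ" using es' unfolding y'_def by linarith
      qed
      have xSZ: "x + SZ = enc M1 P1 L1 S1 (Suc p, s, b, pw, mw, fl, md)"
        using xenc es enc_split[OF SS(5) rng(6) rng(5) rng(4) rng(3) rng(2) rng(1), of "Suc p"] by simp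
      have xSZbd: "x < x + SZ" "x + SZ < S1 * SZ"
      proof -
        show "x < x + SZ" using SS by simp
        have "(Suc p + 1) * SZ \<le> S1 * SZ" using True SS by (intro mult_right_mono) auto
        then show "x + SZ < S1 * SZ" using es xenc by (simp add: algebra_simps; linarith)
      qed
      have vsR: "?Rx (x + SZ) = R n l w i PW (n - Suc p) s b pw mw fl md"
        unfolding xSZ by (rule Rx_enc) (use rng in auto)
      have vtR: "?Rx y' = R n l w i PW (n - Suc p) s' b' pw' mw' fl' md"
        unfolding y'_def by (rule Rx_enc) (use r' rng in auto)
      have NL: "wp NONLEAF m1 (\<lambda>m' t. t \<le> 61 \<and> agree ({19,46} \<union> {50..69}) m' m1 \<and>
         m' 46 = int (if Suc p = i then (if md = 0 then ?Rx (x + SZ) else ?Rx y') else ?Rx (x + SZ) + ?Rx y'))"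
      proof (rule NONLEAF_spec[where Bb="128*n" and Tb="256*n" and lk="l k" and wk="w k"])
        have dk0: "m (128*n + 2*k + 1) = int (l k)" "m (128*n + 2*k + 2) = int (w k)" using Sd kN by blast+
        have dk: "m1 (128*n + 2*k + 1) = int (l k)" "m1 (128*n + 2*k + 2) = int (w k)"
          using dk0 fr1[of "128*n+2*k+1"] fr1[of "128*n+2*k+2"] n1 by auto
        show "m1 (128 * n + 2 * Suc p + 1) = int (l k)" using dk(1) unfolding k_def .
        show "m1 (128 * n + 2 * Suc p + 2) = int (w k)" using dk(2) unfolding k_def .
        show "m1 (256 * n + x + SZ) = int (?Rx (x + SZ))" using tab xSZbd fr1 n1 by (auto simp: add.assoc)
        show "m1 (256 * n + enc M1 P1 L1 S1 (Suc p, if Suc p = i \<and> md = 1 then s else min (s + 1) n,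
           if fl = 0 \<and> l k \<le> b then b - l k else b, if fl = 0 \<and> l k \<le> b then min (pw + w k) PW else pw,
           max mw (w k), if fl = 0 \<and> l k \<le> b then 0 else 1, md)) = int (?Rx y')"
          using tab y'bd fr1 n1 unfolding y'_def s'_def b'_def pw'_def mw'_def fl'_def fit_def by auto
      qed (use H1 S1' SS rng n1 in auto)
      have val: "(if Suc p = i then (if md = 0 then ?Rx (x + SZ) else ?Rx y') else ?Rx (x + SZ) + ?Rx y') = ?Rx x"
      proof -
        have nd: "n - p = Suc (n - Suc p)" using True by simp
        have kk: "n - (n - Suc p) = k" using True k_def by simp
        have md1: "(md = 1) = (md \<noteq> 0)" using rng by auto
        show ?thesis unfolding Rxx vsR vtR nd R.simps Let_def kk
          unfolding s'_def b'_def pw'_def mw'_def fl'_def fit_def k_def md1 by auto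
      qed
      have "wp NONLEAF m1 (\<lambda>m' t. t + 2 \<le> 63 \<and> agree ({19} \<union> {45..69}) m' m1 \<and> m' 46 = int (?Rx x))"
        by (rule wp_mono[OF NL]) (auto simp: agree_def val)
      then show ?thesis unfolding wp_If_eq using hc by simp
    qed
    show "wp (Seq (If (CNeg 44) LEAF NONLEAF) (Seq (B (Add 69 9 30)) (Seq (B (Store 69 46)) (B (Sub 15 15 2))))) m1
      (\<lambda>m2 t2. t1 + t2 \<le> 100 \<and> m2 15 = int x - 1 \<and> m2 (256*n + x) = int (?Rx x) \<and>
       (\<forall>a. ((a < 19 \<and> a \<noteq> 15) \<or> (128 \<le> a \<and> a \<noteq> 256*n + x)) \<longrightarrow> m2 a = m a))"
    proof (rule wp_SeqI[OF IFP])
      fix m2 and t2 :: nat assume H2: "t2 \<le> 63 \<and> agree ({19} \<union> {45..69}) m2 m1 \<and> m2 46 = int (?Rx x)"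
      have ag: "\<And>a. a \<notin> {19} \<union> {45..69} \<Longrightarrow> m2 a = m1 a" using H2 unfolding agree_def by blast
      have r2: "m2 9 = int (256*n)" "m2 30 = int x" "m2 15 = int x" using ag S1' H1 by auto
      have na: "nat (int (256 * n) + int x) = 256*n + x" by simp
      show "wp (Seq (B (Add 69 9 30)) (Seq (B (Store 69 46)) (B (Sub 15 15 2)))) m2
        (\<lambda>m3 t3. t1 + (t2 + t3) \<le> 100 \<and> m3 15 = int x - 1 \<and> m3 (256*n + x) = int (?Rx x) \<and>
         (\<forall>a. ((a < 19 \<and> a \<noteq> 15) \<or> (128 \<le> a \<and> a \<noteq> 256*n + x)) \<longrightarrow> m3 a = m a))"
        unfolding wp_Seq_eq using H1 H2 r2 n1 S
        apply (simp add: wp_Basic_eq na del: of_nat_mult)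
        apply (auto simp: ag fr1)
        done
    qed
  qed
qed


lemma input_mem_012: "input_mem n lbin l w i 0 = int n" "input_mem n lbin l w i 1 = int lbin" "input_mem n lbin l w i 2 = int i"
  by (simp_all add: input_mem_def)

lemma input_mem_lw: assumes "k \<in> {1..n}"
  shows "input_mem n lbin l w i (2*k+1) = int (l k)" "input_mem n lbin l w i (2*k+2) = int (w k)"
proof -
  have k: "1 \<le> k" "k \<le> n" using assms by auto
  have a1: "2*k+1-3 = 2*(k-1)" "2*k+2-3 = 2*(k-1)+1" using k by auto
  show "input_mem n lbin l w i (2*k+1) = int (l k)" unfolding input_mem_def using k a1 by auto
  show "input_mem n lbin l w i (2*k+2) = int (w k)" unfolding input_mem_def using k a1 by auto
qed

definition BOOT0 :: com where
  "BOOT0 = SEQ [B (Add 0 0 0), B (Add 0 0 0), B (Add 0 0 0), B (Add 0 0 0), B (Add 0 0 0), B (Add 0 0 0), B (Add 0 0 0),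
     B (Store 0 1), B (LoadConst 1 1), B (Add 0 0 1), B (Store 0 2), B (LoadConst 1 1), B (Sub 0 0 1),
     B (LoadConst 2 64), B (Div 1 0 2), B (LoadConst 2 2), B (Add 1 1 2), B (LoadConst 2 3), B (Sub 2 1 2)]"

lemma BOOT0_spec:
  assumes "m0 0 = int n" "m0 1 = int lbin" "m0 2 = int i" "1 \<le> n"
  shows "wp BOOT0 m0 (\<lambda>m t. t \<le> 20 \<and> m 0 = int (128*n) \<and> m 1 = int (2*n+2) \<and> m 2 = int (2*n) - 1 \<and>
     m (128*n) = int lbin \<and> m (128*n+1) = int i \<and> (\<forall>a. 3 \<le> a \<and> a < 128*n \<longrightarrow> m a = m0 a))"
proof -
  have e1: "nat (128 * int n) = 128 * n" by simp
  have e2: "nat (128 * int n + 1) = 128 * n + 1" by simp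
  have e3: "128 * int n div 64 = 2 * int n" by simp
  show ?thesis unfolding BOOT0_def using assms
    by (auto simp: wp_Seq_eq wp_Basic_eq e1 e2 e3)
qed

definition CB :: com where
  "CB = SEQ [B (Load 2 1), B (Add 0 0 1), B (Store 0 2), B (Sub 0 0 1), B (LoadConst 2 1), B (Sub 1 1 2),
     B (LoadConst 2 3), B (Sub 2 1 2)]"

definition CI :: "nat \<Rightarrow> nat \<Rightarrow> nat \<Rightarrow> (nat \<Rightarrow> int) \<Rightarrow> nat \<Rightarrow> (nat \<Rightarrow> int) \<Rightarrow> bool" where
  "CI n lbin i m0 j m \<longleftrightarrow> j \<le> 2*n \<and> m 0 = int (128*n) \<and> m 1 = int (j+2) \<and> m 2 = int j - 1 \<and>
     m (128*n) = int lbin \<and> m (128*n+1) = int i \<and> (\<forall>a. 3 \<le> a \<and> a < 128*n \<longrightarrow> m a = m0 a) \<and>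
     (\<forall>a. j+3 \<le> a \<and> a \<le> 2*n+2 \<longrightarrow> m (128*n + a) = m0 a)"

lemma CB_step:
  assumes "CI n lbin i m0 (Suc j) m" "1 \<le> n"
  shows "\<not> holds (CNeg 2) m \<and> wp CB m (\<lambda>m' t. CI n lbin i m0 j m' \<and> t \<le> 8)"
proof -
  have A: "Suc j \<le> 2*n" "m 0 = int (128*n)" "m 1 = int (j+3)" "m 2 = int j" "m (128*n) = int lbin" "m (128*n+1) = int i"
    "\<forall>a. 3 \<le> a \<and> a < 128*n \<longrightarrow> m a = m0 a" "\<forall>a. j+4 \<le> a \<and> a \<le> 2*n+2 \<longrightarrow> m (128*n + a) = m0 a"
    using assms(1) unfolding CI_def by auto
  have r: "m (j+3) = m0 (j+3)" using A(1,7) assms(2) by auto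
  have e1: "nat (int (j+3)) = j+3" by simp
  have e2: "nat (128 * int n + (3 + int j)) = 128*n + (j+3)" by simp
  have e3: "nat (int j + 3) = j + 3" by simp
  have e4: "nat (128 * int n + (int j + 3)) = 128*n + (j+3)" by simp
  show ?thesis unfolding CB_def CI_def using A r assms(2)
    by (auto simp: wp_Seq_eq wp_Basic_eq e2 e3 e4 nat_eq_iff)
qed

lemma COPY_spec:
  assumes "CI n lbin i m0 (2*n) m" "1 \<le> n"
  shows "wp (Until (CNeg 2) CB) m (\<lambda>m' t. CI n lbin i m0 0 m' \<and> t \<le> 2*n*10 + 1)"
proof -
  have "wp (Until (CNeg 2) CB) m (\<lambda>m' t. CI n lbin i m0 0 m' \<and> t \<le> 2*n * (8 + 2) + 1)"
  proof (rule wp_Until[where I="CI n lbin i m0"])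
    show "CI n lbin i m0 (2*n) m" by fact
    show "\<And>m. CI n lbin i m0 0 m \<Longrightarrow> holds (CNeg 2) m" unfolding CI_def by simp
    show "\<And>j m. CI n lbin i m0 (Suc j) m \<Longrightarrow> \<not> holds (CNeg 2) m \<and> wp CB m (\<lambda>m' t. CI n lbin i m0 j m' \<and> t \<le> 8)"
      using CB_step assms(2) by blast
  qed
  then show ?thesis by simp
qed


definition Data :: "nat \<Rightarrow> (nat\<Rightarrow>nat) \<Rightarrow> (nat\<Rightarrow>nat) \<Rightarrow> (nat \<Rightarrow> int) \<Rightarrow> bool" where
  "Data n l w m \<longleftrightarrow> (\<forall>k\<in>{1..n}. m (128*n + 2*k + 1) = int (l k) \<and> m (128*n + 2*k + 2) = int (w k))"

lemma CI0_Data: assumes "CI n lbin i (input_mem n lbin l w i) 0 m" shows "Data n l w m"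
  unfolding Data_def
proof
  fix k assume k: "k \<in> {1..n}"
  have H: "\<forall>a. 3 \<le> a \<and> a \<le> 2*n+2 \<longrightarrow> m (128*n + a) = input_mem n lbin l w i a"
    using assms unfolding CI_def by simp
  have "m (128*n + (2*k + 1)) = int (l k)" using H[rule_format, of "2*k+1"] input_mem_lw[OF k] k by auto
  moreover have "m (128*n + (2*k + 2)) = int (w k)" using H[rule_format, of "2*k+2"] input_mem_lw[OF k] k by auto
  ultimately show "m (128*n + 2*k + 1) = int (l k) \<and> m (128*n + 2*k + 2) = int (w k)" by (simp add: add.assoc)
qed

lemma Data_agree: "Data n l w m \<Longrightarrow> agree W m' m \<Longrightarrow> \<forall>a\<in>W. a < 128 \<Longrightarrow> 1 \<le> n \<Longrightarrow> Data n l w m'"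
  unfolding Data_def agree_def
proof (intro ballI)
  fix k assume D: "\<forall>k\<in>{1..n}. m (128*n + 2*k + 1) = int (l k) \<and> m (128*n + 2*k + 2) = int (w k)"
    and ag: "\<forall>a. a \<notin> W \<longrightarrow> m' a = m a" and W: "\<forall>a\<in>W. a < 128" and n: "1 \<le> n" and k: "k \<in> {1..n}"
  have "128*n + 2*k + 1 \<notin> W" "128*n + 2*k + 2 \<notin> W" using W n by force+
  then show "m' (128*n + 2*k + 1) = int (l k) \<and> m' (128*n + 2*k + 2) = int (w k)" using ag D k by auto
qed

definition SETUP :: com where
  "SETUP = SEQ [B (LoadConst 20 128), B (Div 3 0 20), B (Load 4 0), B (LoadConst 20 1), B (Add 21 0 20), B (Load 5 21),
     B (LoadConst 1 0), B (LoadConst 2 1)]"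

lemma SETUP_spec:
  assumes "CI n lbin i m0 0 m" "1 \<le> n"
  shows "wp SETUP m (\<lambda>m' t. t = 8 \<and> agree {1,2,3,4,5,20,21} m' m \<and> m' 0 = int (128*n) \<and> m' 1 = 0 \<and> m' 2 = 1 \<and>
     m' 3 = int n \<and> m' 4 = int lbin \<and> m' 5 = int i)"
proof -
  have A: "m 0 = int (128*n)" "m (128*n) = int lbin" "m (128*n+1) = int i" using assms unfolding CI_def by auto
  have e1: "nat (128 * int n) = 128 * n" by simp
  have e2: "nat (128 * int n + 1) = 128 * n + 1" by simp
  show ?thesis unfolding SETUP_def using A assms(2)
    by (auto simp: wp_Seq_eq wp_Basic_eq e1 e2 agree_def nat_eq_iff)
qed

definition PB :: com where
  "PB = SEQ [B (Add 24 22 22), B (Add 24 24 0), B (Add 24 24 2), B (Add 24 24 2), B (Load 25 24), B (Add 6 6 25),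
     B (Sub 26 7 25), If (CNeg 26) (MOV 7 25) SKIP, B (Sub 22 22 2), B (Sub 23 22 2)]"

definition PWMW :: com where
  "PWMW = SEQ [B (LoadConst 6 0), B (LoadConst 7 0), MOV 22 3, B (Sub 23 22 2), Until (CNeg 23) PB]"

definition PI :: "nat \<Rightarrow> (nat\<Rightarrow>nat) \<Rightarrow> (nat \<Rightarrow> int) \<Rightarrow> nat \<Rightarrow> (nat \<Rightarrow> int) \<Rightarrow> bool" where
  "PI n w mS j m \<longleftrightarrow> j \<le> n \<and> m 22 = int j \<and> m 23 = int j - 1 \<and> m 6 = int (sum w {j<..n}) \<and>
     m 7 = int (Max (insert 0 (w ` {j<..n}))) \<and> agree {6,7,19,22,23,24,25,26} m mS"

lemma sum_step: "j < n \<Longrightarrow> sum w {j<..n} = w (Suc j) + sum w {Suc j<..n}"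
proof -
  assume "j < n"
  then have "{j<..n} = insert (Suc j) {Suc j<..n}" by auto
  then show ?thesis by simp
qed

lemma max_step: "j < n \<Longrightarrow> Max (insert 0 (w ` {j<..n})) = max (w (Suc j)) (Max (insert (0::nat) (w ` {Suc j<..n})))"
proof -
  assume "j < n"
  then have "{j<..n} = insert (Suc j) {Suc j<..n}" by auto
  then have "insert 0 (w ` {j<..n}) = insert (w (Suc j)) (insert 0 (w ` {Suc j<..n}))" by auto
  then show ?thesis by (simp add: Max_insert)
qed

lemma PB_step:
  assumes "PI n w mS (Suc j) m" "mS 0 = int (128*n)" "mS 1 = 0" "mS 2 = 1" "Data n l w mS" "1 \<le> n"
  shows "\<not> holds (CNeg 23) m \<and> wp PB m (\<lambda>m' t. PI n w mS j m' \<and> t \<le> 14)"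
proof -
  have A: "Suc j \<le> n" "m 22 = int (Suc j)" "m 23 = int j" "m 6 = int (sum w {Suc j<..n})"
     "m 7 = int (Max (insert 0 (w ` {Suc j<..n})))" "agree {6,7,19,22,23,24,25,26} m mS"
    using assms(1) unfolding PI_def by auto
  have ag: "\<And>a. a \<notin> {6,7,19,22,23,24,25,26} \<Longrightarrow> m a = mS a" using A(6) unfolding agree_def by blast
  have R: "m 0 = int (128*n)" "m 1 = 0" "m 2 = 1" using ag assms by auto
  have wk: "m (128*n + 2*Suc j + 2) = int (w (Suc j))"
  proof -
    have kin: "Suc j \<in> {1..n}" using A(1) by simp
    have "mS (128*n + 2*Suc j + 2) = int (w (Suc j))" using assms(5) kin unfolding Data_def by blast
    moreover have "128*n + 2*Suc j + 2 \<notin> {6,7,19,22,23,24,25,26}" using assms(6) by auto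
    ultimately show ?thesis using ag by auto
  qed
  have ss: "sum w {j<..n} = w (Suc j) + sum w {Suc j<..n}" by (rule sum_step) (use A(1) in simp)
  have ms: "Max (insert 0 (w ` {j<..n})) = max (w (Suc j)) (Max (insert (0::nat) (w ` {Suc j<..n})))"
    by (rule max_step) (use A(1) in simp)
  have e: "nat (4 + (2 * int j + 128 * int n)) = 128*n + 2*Suc j + 2" by simp
  have W: "wp PB m (\<lambda>m' t. t \<le> 14 \<and> agree {6,7,19,22,23,24,25,26} m' m \<and> m' 22 = int j \<and> m' 23 = int j - 1 \<and>
      m' 6 = m 6 + int (w (Suc j)) \<and> m' 7 = max (m 7) (int (w (Suc j))))"
    unfolding PB_def using A(2,3) R wk assms(6)
    by (auto simp: wp_Seq_eq wp_Basic_eq wp_If_eq agree_def e max_def)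
  show ?thesis
  proof
    show "\<not> holds (CNeg 23) m" using A by simp
    show "wp PB m (\<lambda>m' t. PI n w mS j m' \<and> t \<le> 14)"
    proof (rule wp_mono[OF W])
      fix m' and t :: nat
      assume H: "t \<le> 14 \<and> agree {6,7,19,22,23,24,25,26} m' m \<and> m' 22 = int j \<and> m' 23 = int j - 1 \<and>
      m' 6 = m 6 + int (w (Suc j)) \<and> m' 7 = max (m 7) (int (w (Suc j)))"
      have "m' 6 = int (sum w {j<..n})" using H A(4) ss by simp
      moreover have "m' 7 = int (Max (insert 0 (w ` {j<..n})))" using H A(5) ms by (simp add: max.commute)
      moreover have "agree {6,7,19,22,23,24,25,26} m' mS" using H A(6) unfolding agree_def by auto
      ultimately show "PI n w mS j m' \<and> t \<le> 14" using H A(1) unfolding PI_def by auto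
    qed
  qed
qed


lemma Until_from:
  assumes "I k m" "\<And>m. I 0 m \<Longrightarrow> holds c m"
    "\<And>j m. I (Suc j) m \<Longrightarrow> \<not> holds c m \<and> wp b m (\<lambda>m' t. I j m' \<and> t \<le> K)"
    "\<And>m' t. I 0 m' \<Longrightarrow> t \<le> k * (K + 2) + 1 \<Longrightarrow> Q m' t"
  shows "wp (Until c b) m Q"
  by (rule wp_mono[OF wp_Until[where I=I and K=K, OF assms(1-3)]]) (use assms(4) in auto)

lemma PWMW_spec:
  assumes "mS 0 = int (128*n)" "mS 1 = 0" "mS 2 = 1" "mS 3 = int n" "Data n l w mS" "1 \<le> n"
  shows "wp PWMW mS (\<lambda>m t. PI n w mS 0 m \<and> t \<le> n * 16 + 5)"
  unfolding PWMW_def SEQ.simps wp_Seq_eq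
  apply (simp add: wp_Basic_eq)
  apply (rule Until_from[where I="PI n w mS" and k=n and K=14])
  subgoal using assms unfolding PI_def by (auto simp: agree_def)
  subgoal unfolding PI_def by simp
  subgoal for j m using PB_step[of n w mS j m l] assms by blast
  subgoal by simp
  done

definition FB :: com where
  "FB = SEQ [B (Mul 24 24 22), B (Add 25 8 22), B (Store 25 24), B (Add 22 22 2), B (Sub 23 3 22)]"

definition FACT :: com where
  "FACT = SEQ [B (LoadConst 20 2), B (Div 21 0 20), B (Add 8 0 21), B (Store 8 2), MOV 22 2, MOV 24 2, B (Sub 23 3 22),
     Until (CNeg 23) FB]"

definition FI :: "nat \<Rightarrow> (nat \<Rightarrow> int) \<Rightarrow> nat \<Rightarrow> (nat \<Rightarrow> int) \<Rightarrow> bool" where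
  "FI n mP j m \<longleftrightarrow> j \<le> n \<and> m 22 = int (n+1-j) \<and> m 23 = int j - 1 \<and> m 24 = int (fact (n-j)) \<and>
     m 8 = int (192*n) \<and> (\<forall>t\<le>n-j. m (192*n+t) = int (fact t)) \<and>
     (\<forall>a. (a < 19 \<and> a \<noteq> 8) \<or> (128 \<le> a \<and> a < 192*n) \<longrightarrow> m a = mP a)"

lemma FB_step:
  assumes "FI n mP (Suc j) m" "mP 2 = 1" "mP 3 = int n" "1 \<le> n"
  shows "\<not> holds (CNeg 23) m \<and> wp FB m (\<lambda>m' t. FI n mP j m' \<and> t \<le> 5)"
proof -
  have A: "Suc j \<le> n" "m 22 = int (n - j)" "m 23 = int j" "m 24 = int (fact (n - Suc j))" "m 8 = int (192*n)"
    "\<forall>t\<le>n - Suc j. m (192*n+t) = int (fact t)" "\<forall>a. (a < 19 \<and> a \<noteq> 8) \<or> (128 \<le> a \<and> a < 192*n) \<longrightarrow> m a = mP a"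
    using assms(1) unfolding FI_def by auto
  have R: "m 2 = 1" "m 3 = int n" using A(7) assms by auto
  define s where "s = n - j"
  have s1: "1 \<le> s" "n - Suc j = s - 1" "n - j = s" using A(1) s_def by auto
  have fs: "fact (s - 1) * s = fact s" using s1(1) by (cases s) (auto simp: algebra_simps)
  have W: "wp FB m (\<lambda>m' t. t = 5 \<and> m' = m(24 := int (fact (s-1)) * int s, 25 := int (192*n) + int s,
       192*n + s := int (fact (s-1)) * int s, 22 := int s + 1, 23 := int n - (int s + 1)))"
  proof -
    have e: "nat (192 * int n + int s) = 192*n + s" by simp
    show ?thesis unfolding FB_def using A(2,4,5) R s1 assms(4) by (simp add: wp_Seq_eq wp_Basic_eq e)
  qed
  show ?thesis
  proof
    show "\<not> holds (CNeg 23) m" using A by simp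
    show "wp FB m (\<lambda>m' t. FI n mP j m' \<and> t \<le> 5)"
    proof (rule wp_mono[OF W])
      fix m' and t :: nat
      assume H: "t = 5 \<and> m' = m(24 := int (fact (s-1)) * int s, 25 := int (192*n) + int s,
       192*n + s := int (fact (s-1)) * int s, 22 := int s + 1, 23 := int n - (int s + 1))"
      have v: "int (fact (s-1)) * int s = int (fact s)" using fs by (metis of_nat_mult)
      have hi: "192*n + s \<noteq> 22" "192*n + s \<noteq> 23" "192*n + s \<noteq> 24" "192*n + s \<noteq> 25" using assms(4) by auto
      have nj: "n + 1 - j = s + 1" using s1 A(1) by linarith
      have "m' 22 = int (n+1-j)" using H hi unfolding nj by simp
      moreover have "m' 23 = int j - 1" using H s1(3) A(1) by auto
      moreover have "m' 24 = int (fact (n - j))" using H v s1 by auto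
      moreover have "m' 8 = int (192*n)" using H A(5) assms(4) by auto
      moreover have "\<forall>t\<le>n-j. m' (192*n+t) = int (fact t)"
      proof (intro allI impI)
        fix t assume "t \<le> n - j"
        then consider "t = s" | "t \<le> n - Suc j" using s1 by linarith
        then show "m' (192*n+t) = int (fact t)"
        proof cases
          case 1 then show ?thesis using H v hi by simp
        next
          case 2 then have "t \<noteq> s" "192*n + t \<noteq> 192*n + s" using s1 by auto
          then show ?thesis using H A(6) 2 assms(4) by auto
        qed
      qed
      moreover have "\<forall>a. (a < 19 \<and> a \<noteq> 8) \<or> (128 \<le> a \<and> a < 192*n) \<longrightarrow> m' a = mP a"
        using H A(7) assms(4) by auto
      ultimately show "FI n mP j m' \<and> t \<le> 5" using H A(1) unfolding FI_def by auto
    qed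
  qed
qed

lemma FACT_spec:
  assumes "mP 0 = int (128*n)" "mP 2 = 1" "mP 3 = int n" "1 \<le> n" "mP 1 = 0"
  shows "wp FACT mP (\<lambda>m t. FI n mP 0 m \<and> t \<le> n * 7 + 8)"
proof -
  have e1: "128 * int n div 2 = 64 * int n" by simp
  have e2: "nat (128 * int n + 64 * int n) = 192 * n" by simp
  have e3: "nat (192 * int n) = 192 * n" by simp
  show ?thesis
  unfolding FACT_def SEQ.simps wp_Seq_eq
  apply (simp add: wp_Basic_eq assms e1 e2 e3)
  apply (rule Until_from[where I="FI n mP" and k=n and K=5])
  subgoal using assms unfolding FI_def by auto
  subgoal unfolding FI_def by simp
  subgoal for j m using FB_step[of n mP j m] assms by blast
  subgoal by simp
  done
qed


definition DPINIT :: com where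
  "DPINIT = SEQ [B (Add 9 0 0), B (Add 10 3 2), B (Add 11 4 2), B (Add 12 6 2), B (Add 13 7 2), B (Mul 14 10 11),
     B (Mul 14 14 12), B (Mul 14 14 13), B (Add 14 14 14), B (Add 14 14 14), B (Mul 15 10 14), B (Sub 15 15 2)]"

definition SZf :: "nat \<Rightarrow> nat \<Rightarrow> nat \<Rightarrow> nat \<Rightarrow> nat" where
  "SZf n lbin PW MW = (n+1)*(lbin+1)*(PW+1)*(MW+1)*4"

lemma DPINIT_spec:
  assumes "m 0 = int (128*n)" "m 2 = 1" "m 3 = int n" "m 4 = int lbin" "m 6 = int PW" "m 7 = int MW"
  shows "wp DPINIT m (\<lambda>m' t. t = 12 \<and> agree {9,10,11,12,13,14,15} m' m \<and> m' 9 = int (256*n) \<and> m' 10 = int (n+1) \<and>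
    m' 11 = int (lbin+1) \<and> m' 12 = int (PW+1) \<and> m' 13 = int (MW+1) \<and> m' 14 = int (SZf n lbin PW MW) \<and>
    m' 15 = int ((n+1) * SZf n lbin PW MW) - 1)"
  unfolding DPINIT_def SZf_def using assms
  by (simp add: wp_Seq_eq wp_Basic_eq agree_def algebra_simps)

lemma Stat_frame:
  assumes "Stat n lbin l w i PW MW mD" "\<forall>a. ((a < 19 \<and> a \<noteq> 15) \<or> (128 \<le> a \<and> a < 256*n)) \<longrightarrow> m a = mD a" "1 \<le> n"
  shows "Stat n lbin l w i PW MW m"
proof -
  have lo: "\<And>a. a < 15 \<Longrightarrow> m a = mD a" using assms(2) by auto
  have d: "\<And>k. k \<in> {1..n} \<Longrightarrow> m (128*n + 2*k + 1) = mD (128*n + 2*k + 1) \<and> m (128*n + 2*k + 2) = mD (128*n + 2*k + 2)"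
    using assms(2,3) by auto
  have f: "\<And>t. t \<le> n \<Longrightarrow> m (192*n + t) = mD (192*n + t)" using assms(2,3) by auto
  show ?thesis using assms(1) lo d f unfolding Stat_def by auto
qed

definition DI :: "nat \<Rightarrow> nat \<Rightarrow> (nat\<Rightarrow>nat) \<Rightarrow> (nat\<Rightarrow>nat) \<Rightarrow> nat \<Rightarrow> nat \<Rightarrow> nat \<Rightarrow> (nat \<Rightarrow> int) \<Rightarrow> nat \<Rightarrow> (nat \<Rightarrow> int) \<Rightarrow> bool" where
  "DI n lbin l w i PW MW mD j m \<longleftrightarrow> j \<le> (n+1) * SZf n lbin PW MW \<and> m 15 = int j - 1 \<and>
     (\<forall>a. ((a < 19 \<and> a \<noteq> 15) \<or> (128 \<le> a \<and> a < 256*n)) \<longrightarrow> m a = mD a) \<and>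
     (\<forall>y. j \<le> y \<and> y < (n+1) * SZf n lbin PW MW \<longrightarrow> m (256*n + y) = int (Rx n l w i PW (MW+1) (PW+1) (lbin+1) (n+1) y))"

lemma DP_step:
  assumes "DI n lbin l w i PW MW mD (Suc j) m" "Stat n lbin l w i PW MW mD" "1 \<le> n" "\<forall>k\<in>{1..n}. w k \<le> MW"
  shows "\<not> holds (CNeg 15) m \<and> wp BODY m (\<lambda>m' t. DI n lbin l w i PW MW mD j m' \<and> t \<le> 100)"
proof -
  let ?SZ = "SZf n lbin PW MW"
  have A: "Suc j \<le> (n+1) * ?SZ" "m 15 = int j"
    "\<forall>a. ((a < 19 \<and> a \<noteq> 15) \<or> (128 \<le> a \<and> a < 256*n)) \<longrightarrow> m a = mD a"
    "\<forall>y. Suc j \<le> y \<and> y < (n+1) * ?SZ \<longrightarrow> m (256*n + y) = int (Rx n l w i PW (MW+1) (PW+1) (lbin+1) (n+1) y)"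
    using assms(1) unfolding DI_def by auto
  have St: "Stat n lbin l w i PW MW m" by (rule Stat_frame[OF assms(2) A(3) assms(3)])
  have B: "wp BODY m (\<lambda>m' t. t \<le> 100 \<and> m' 15 = int j - 1 \<and> m' (256*n + j) = int (Rx n l w i PW (MW+1) (PW+1) (lbin+1) (n+1) j) \<and>
     (\<forall>a. ((a < 19 \<and> a \<noteq> 15) \<or> (128 \<le> a \<and> a \<noteq> 256*n + j)) \<longrightarrow> m' a = m a))"
  proof (rule BODY_spec[OF St assms(3) assms(4)])
    show "?SZ = (n+1)*(lbin+1)*(PW+1)*(MW+1)*4" unfolding SZf_def ..
    show "j < (n+1) * ?SZ" using A(1) by simp
    show "\<forall>y. j < y \<and> y < (n+1) * ?SZ \<longrightarrow> m (256*n + y) = int (Rx n l w i PW (MW+1) (PW+1) (lbin+1) (n+1) y)"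
      using A(4) by auto
  qed (use A in auto)
  show ?thesis
  proof
    show "\<not> holds (CNeg 15) m" using A by simp
    show "wp BODY m (\<lambda>m' t. DI n lbin l w i PW MW mD j m' \<and> t \<le> 100)"
    proof (rule wp_mono[OF B])
      fix m' and t :: nat
      assume H: "t \<le> 100 \<and> m' 15 = int j - 1 \<and> m' (256*n + j) = int (Rx n l w i PW (MW+1) (PW+1) (lbin+1) (n+1) j) \<and>
     (\<forall>a. ((a < 19 \<and> a \<noteq> 15) \<or> (128 \<le> a \<and> a \<noteq> 256*n + j)) \<longrightarrow> m' a = m a)"
      have f1: "\<forall>a. ((a < 19 \<and> a \<noteq> 15) \<or> (128 \<le> a \<and> a < 256*n)) \<longrightarrow> m' a = mD a"
      proof (intro allI impI)
        fix a assume a: "(a < 19 \<and> a \<noteq> 15) \<or> (128 \<le> a \<and> a < 256*n)"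
        then have "m' a = m a" using H by auto
        then show "m' a = mD a" using A(3) a by auto
      qed
      have f2: "\<forall>y. j \<le> y \<and> y < (n+1) * ?SZ \<longrightarrow> m' (256*n + y) = int (Rx n l w i PW (MW+1) (PW+1) (lbin+1) (n+1) y)"
      proof (intro allI impI)
        fix y assume y: "j \<le> y \<and> y < (n+1) * ?SZ"
        show "m' (256*n + y) = int (Rx n l w i PW (MW+1) (PW+1) (lbin+1) (n+1) y)"
        proof (cases "y = j")
          case True then show ?thesis using H by simp
        next
          case False
          then have "m' (256*n + y) = m (256*n + y)" using H assms(3) by auto
          then show ?thesis using A(4) y False by auto
        qed
      qed
      show "DI n lbin l w i PW MW mD j m' \<and> t \<le> 100" unfolding DI_def using f1 f2 H A(1) by auto
    qed
  qed
qed

lemma DP_spec: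
  assumes "Stat n lbin l w i PW MW mD" "1 \<le> n" "\<forall>k\<in>{1..n}. w k \<le> MW" "mD 15 = int ((n+1) * SZf n lbin PW MW) - 1"
  shows "wp (Until (CNeg 15) BODY) mD (\<lambda>m t. DI n lbin l w i PW MW mD 0 m \<and> t \<le> (n+1) * SZf n lbin PW MW * 102 + 1)"
  apply (rule Until_from[where I="DI n lbin l w i PW MW mD" and k="(n+1) * SZf n lbin PW MW" and K=100])
  subgoal using assms unfolding DI_def by auto
  subgoal unfolding DI_def by simp
  subgoal for j m using DP_step[of n lbin l w i PW MW mD j m] assms by blast
  subgoal by simp
  done

definition OUTa :: com where
  "OUTa = SEQ [B (Mul 30 4 12), B (Mul 30 30 13), B (Add 30 30 30), B (Add 30 30 30), B (Add 30 30 9)]"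
definition OUTb :: com where
  "OUTb = SEQ [B (Load 31 30), B (Add 30 30 2), B (Load 32 30), B (Add 33 8 3), B (Load 1 33), B (Sub 0 32 31)]"
definition OUT :: com where
  "OUT = Seq OUTa OUTb"

lemma OUTa_spec:
  assumes "m 4 = int lbin" "m 9 = int (256*n)" "m 12 = int (PW+1)" "m 13 = int (MW+1)"
  shows "wp OUTa m (\<lambda>m' t. t = 5 \<and> m' 30 = int (256*n + lbin * (PW+1) * (MW+1) * 4) \<and> agree {30} m' m)"
  unfolding OUTa_def using assms by (simp add: wp_Seq_eq wp_Basic_eq agree_def algebra_simps)

lemma OUTb_spec:
  assumes "m 30 = int A" "m 2 = 1" "m 3 = int n" "m 8 = int Fb" "m (Fb + n) = int (fact n)" "128 \<le> A" "128 \<le> Fb"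
    "m A = int R0" "m (Suc A) = int R1"
  shows "wp OUTb m (\<lambda>m' t. t = 6 \<and> m' 1 = int (fact n) \<and> m' 0 = int R1 - int R0)"
proof -
  have e: "nat (int Fb + int n) = Fb + n" by simp
  have e2: "nat (int A + 1) = Suc A" by simp
  show ?thesis unfolding OUTb_def using assms by (simp add: wp_Seq_eq wp_Basic_eq e e2)
qed

lemma OUT_spec:
  assumes St: "Stat n lbin l w i PW MW m" and n1: "1 \<le> n"
    and tab: "\<forall>y. y < (n+1) * SZf n lbin PW MW \<longrightarrow> m (256*n + y) = int (Rx n l w i PW (MW+1) (PW+1) (lbin+1) (n+1) y)"
  shows "wp OUT m (\<lambda>m' t. t = 11 \<and> m' 1 = int (fact n) \<and>
     m' 0 = int (R n l w i PW n 0 lbin 0 0 0 1) - int (R n l w i PW n 0 lbin 0 0 0 0))"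
proof -
  let ?y = "lbin * (PW+1) * (MW+1) * 4"
  have ey: "\<And>md. md < 2 \<Longrightarrow> ?y + md = enc (MW+1) (PW+1) (lbin+1) (n+1) (0, 0, lbin, 0, 0, 0, md)" by simp
  have Ry: "Rx n l w i PW (MW+1) (PW+1) (lbin+1) (n+1) (?y + md) = R n l w i PW n 0 lbin 0 0 0 md" if md: "md < 2" for md
  proof -
    have "Rx n l w i PW (MW+1) (PW+1) (lbin+1) (n+1) (enc (MW+1) (PW+1) (lbin+1) (n+1) (0, 0, lbin, 0, 0, 0, md))
        = R n l w i PW (n - 0) 0 lbin 0 0 0 md"
      by (rule Rx_enc) (use md in auto)
    then show ?thesis unfolding ey[OF md, symmetric] by simp
  qed
  have ylt: "?y + 1 < (n+1) * SZf n lbin PW MW"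
  proof -
    have "?y + 1 < (lbin+1) * (PW+1) * (MW+1) * 4" by (simp add: algebra_simps)
    also have "\<dots> \<le> (n+1)*(n+1)*((lbin+1) * (PW+1) * (MW+1) * 4)"
      using mult_le_mono1[of 1 "(n+1)*(n+1)" "(lbin+1) * (PW+1) * (MW+1) * 4"] by simp
    also have "\<dots> = (n+1) * SZf n lbin PW MW" by (simp only: SZf_def mult.assoc)
    finally show ?thesis .
  qed
  have T0: "m (256*n + ?y) = int (R n l w i PW n 0 lbin 0 0 0 0)" using tab ylt Ry[of 0] by auto
  have T1: "m (256*n + ?y + 1) = int (R n l w i PW n 0 lbin 0 0 0 1)" using tab ylt Ry[of 1] by (auto simp: add.assoc)
  have S: "m 2 = 1" "m 3 = int n" "m 4 = int lbin" "m 8 = int (192*n)" "m 9 = int (256*n)" "m 12 = int (PW+1)" "m 13 = int (MW+1)"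
    "m (192*n + n) = int (fact n)" using St unfolding Stat_def by auto
  have Wa: "wp OUTa m (\<lambda>m' t. t = 5 \<and> m' 30 = int (256*n + ?y) \<and> agree {30} m' m)"
    by (rule OUTa_spec) (use S in auto)
  show ?thesis unfolding OUT_def
  proof (rule wp_SeqI[OF Wa])
    fix m1 and t1 :: nat assume H: "t1 = 5 \<and> m1 30 = int (256*n + ?y) \<and> agree {30} m1 m"
    have ag: "\<And>a. a \<noteq> 30 \<Longrightarrow> m1 a = m a" using H unfolding agree_def by auto
    have Wb: "wp OUTb m1 (\<lambda>m' t. t = 6 \<and> m' 1 = int (fact n) \<and>
       m' 0 = int (R n l w i PW n 0 lbin 0 0 0 1) - int (R n l w i PW n 0 lbin 0 0 0 0))"
    proof (rule OUTb_spec[where A="256*n + ?y" and Fb="192*n"])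
      show "m1 (256*n + ?y) = int (R n l w i PW n 0 lbin 0 0 0 0)" using T0 ag n1 by simp
      show "m1 (Suc (256*n + ?y)) = int (R n l w i PW n 0 lbin 0 0 0 1)" using T1 ag n1 by simp
      show "m1 (192*n + n) = int (fact n)" using S ag n1 by simp
    qed (use H S ag n1 in auto)
    show "wp OUTb m1 (\<lambda>m2 t2. t1 + t2 = 11 \<and> m2 1 = int (fact n) \<and>
       m2 0 = int (R n l w i PW n 0 lbin 0 0 0 1) - int (R n l w i PW n 0 lbin 0 0 0 0))"
      by (rule wp_mono[OF Wb]) (use H in auto)
  qed
qed


definition PROG :: com where
  "PROG = SEQ [BOOT0, Until (CNeg 2) CB, SETUP, PWMW, FACT, DPINIT, Until (CNeg 15) BODY, OUT]"

lemma wpE: "wp c m Q \<Longrightarrow> (\<And>m' t. big c m m' t \<Longrightarrow> Q m' t \<Longrightarrow> thesis) \<Longrightarrow> thesis"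
  unfolding wp_def by blast

lemma prog_spec:
  fixes n lbin :: nat and l w :: "nat \<Rightarrow> nat"
  assumes iN: "i \<in> {1..n}"
  defines "PW \<equiv> sum w {1..n}" and "MW \<equiv> Max (insert 0 (w ` {1..n}))"
  shows "wp PROG (input_mem n lbin l w i) (\<lambda>m t. m 1 = int (fact n) \<and>
     m 0 = int (R n l w i PW n 0 lbin 0 0 0 1) - int (R n l w i PW n 0 lbin 0 0 0 0) \<and>
     t \<le> 66 + 43*n + (n+1) * SZf n lbin PW MW * 102 + 1)"
proof -
  let ?m0 = "input_mem n lbin l w i"
  have n1: "1 \<le> n" using iN by simp
  have wle: "\<forall>k\<in>{1..n}. w k \<le> MW" unfolding MW_def by (auto intro: Max_ge)
  have I0: "?m0 0 = int n" "?m0 1 = int lbin" "?m0 2 = int i" by (fact input_mem_012)+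
  have W1: "wp BOOT0 ?m0 (\<lambda>m t. t \<le> 20 \<and> m 0 = int (128*n) \<and> m 1 = int (2*n+2) \<and> m 2 = int (2*n) - 1 \<and>
     m (128*n) = int lbin \<and> m (128*n+1) = int i \<and> (\<forall>a. 3 \<le> a \<and> a < 128*n \<longrightarrow> m a = ?m0 a))"
    by (rule BOOT0_spec) (use I0 n1 in auto)
  then obtain m1 t1 where B1: "big BOOT0 ?m0 m1 t1" and H1: "t1 \<le> 20 \<and> m1 0 = int (128*n) \<and> m1 1 = int (2*n+2) \<and> m1 2 = int (2*n) - 1 \<and>
     m1 (128*n) = int lbin \<and> m1 (128*n+1) = int i \<and> (\<forall>a. 3 \<le> a \<and> a < 128*n \<longrightarrow> m1 a = ?m0 a)"
    by (rule wpE)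
  have C1: "CI n lbin i ?m0 (2*n) m1" using H1 unfolding CI_def by (auto simp: add.commute)
  obtain m2 t2 where B2: "big (Until (CNeg 2) CB) m1 m2 t2" and H2: "CI n lbin i ?m0 0 m2 \<and> t2 \<le> 2*n*10 + 1"
    using COPY_spec[OF C1 n1] by (rule wpE)
  have D2: "Data n l w m2" using H2 CI0_Data by blast
  obtain m3 t3 where B3: "big SETUP m2 m3 t3" and H3: "t3 = 8 \<and> agree {1,2,3,4,5,20,21} m3 m2 \<and> m3 0 = int (128*n) \<and> m3 1 = 0 \<and> m3 2 = 1 \<and>
     m3 3 = int n \<and> m3 4 = int lbin \<and> m3 5 = int i"
    using SETUP_spec[of n lbin i ?m0 m2] H2 n1 by (auto elim: wpE)
  have D3: "Data n l w m3" by (rule Data_agree[OF D2]) (use H3 n1 in auto)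
  obtain m4 t4 where B4: "big PWMW m3 m4 t4" and H4: "PI n w m3 0 m4 \<and> t4 \<le> n * 16 + 5"
    using PWMW_spec[of m3 n l w] H3 D3 n1 by (auto elim: wpE)
  have P4: "m4 6 = int PW" "m4 7 = int MW" "agree {6,7,19,22,23,24,25,26} m4 m3"
  proof -
    have e: "{0<..n} = {1..n}" by auto
    show "m4 6 = int PW" "m4 7 = int MW" "agree {6,7,19,22,23,24,25,26} m4 m3"
      using H4 unfolding PI_def PW_def MW_def e by auto
  qed
  have ag4: "\<And>a. a \<notin> {6,7,19,22,23,24,25,26} \<Longrightarrow> m4 a = m3 a" using P4(3) unfolding agree_def by blast
  have D4: "Data n l w m4" by (rule Data_agree[OF D3 P4(3)]) (use n1 in auto)
  have R4: "m4 0 = int (128*n)" "m4 1 = 0" "m4 2 = 1" "m4 3 = int n" "m4 4 = int lbin" "m4 5 = int i"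
    using H3 ag4 by auto
  obtain m5 t5 where B5: "big FACT m4 m5 t5" and H5: "FI n m4 0 m5 \<and> t5 \<le> n * 7 + 8"
    using FACT_spec[of m4 n] R4 n1 by (auto elim: wpE)
  have F5: "m5 8 = int (192*n)" "\<forall>t\<le>n. m5 (192*n+t) = int (fact t)"
    "\<forall>a. (a < 19 \<and> a \<noteq> 8) \<or> (128 \<le> a \<and> a < 192*n) \<longrightarrow> m5 a = m4 a"
    using H5 unfolding FI_def by auto
  have R5: "m5 0 = int (128*n)" "m5 2 = 1" "m5 3 = int n" "m5 4 = int lbin" "m5 6 = int PW" "m5 7 = int MW"
    using F5(3) R4 P4 by auto
  obtain m6 t6 where B6: "big DPINIT m5 m6 t6" and H6: "t6 = 12 \<and> agree {9,10,11,12,13,14,15} m6 m5 \<and> m6 9 = int (256*n) \<and> m6 10 = int (n+1) \<and>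
    m6 11 = int (lbin+1) \<and> m6 12 = int (PW+1) \<and> m6 13 = int (MW+1) \<and> m6 14 = int (SZf n lbin PW MW) \<and>
    m6 15 = int ((n+1) * SZf n lbin PW MW) - 1"
    using DPINIT_spec[of m5 n lbin PW MW] R5 by (auto elim: wpE)
  have ag6: "\<And>a. a \<notin> {9,10,11,12,13,14,15} \<Longrightarrow> m6 a = m5 a" using H6 unfolding agree_def by blast
  have St6: "Stat n lbin l w i PW MW m6"
    unfolding Stat_def
  proof (intro conjI)
    show "m6 0 = int (128*n)" "m6 1 = 0" "m6 2 = 1" "m6 3 = int n" "m6 4 = int lbin" "m6 5 = int i"
      "m6 6 = int PW" "m6 7 = int MW" "m6 8 = int (192*n)"
      using ag6 F5 R4 R5 by auto
    show "m6 9 = int (256*n)" "m6 10 = int (n+1)" "m6 11 = int (lbin+1)" "m6 12 = int (PW+1)" "m6 13 = int (MW+1)"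
      "m6 14 = int ((n+1)*(lbin+1)*(PW+1)*(MW+1)*4)" using H6 unfolding SZf_def by auto
    show "\<forall>k\<in>{1..n}. m6 (128*n + 2*k + 1) = int (l k) \<and> m6 (128*n + 2*k + 2) = int (w k)"
    proof
      fix k assume k: "k \<in> {1..n}"
      have a: "128*n + 2*k + 1 < 192*n" "128*n + 2*k + 2 < 192*n" "128 \<le> 128*n + 2*k + 1" using k n1 by auto
      have "m6 (128*n + 2*k + 1) = m4 (128*n + 2*k + 1)" "m6 (128*n + 2*k + 2) = m4 (128*n + 2*k + 2)"
        using ag6 F5(3) a by auto
      then show "m6 (128*n + 2*k + 1) = int (l k) \<and> m6 (128*n + 2*k + 2) = int (w k)"
        using D4 k unfolding Data_def by auto
    qed
    show "\<forall>t\<le>n. m6 (192*n + t) = int (fact t)"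
    proof (intro allI impI)
      fix t assume "t \<le> n"
      then show "m6 (192*n + t) = int (fact t)" using ag6 F5(2) n1 by auto
    qed
  qed
  obtain m7 t7 where B7: "big (Until (CNeg 15) BODY) m6 m7 t7" and H7: "DI n lbin l w i PW MW m6 0 m7 \<and> t7 \<le> (n+1) * SZf n lbin PW MW * 102 + 1"
    using DP_spec[OF St6 n1 wle] H6 by (auto elim: wpE)
  have St7: "Stat n lbin l w i PW MW m7" by (rule Stat_frame[OF St6 _ n1]) (use H7 in \<open>auto simp: DI_def\<close>)
  have tab7: "\<forall>y. y < (n+1) * SZf n lbin PW MW \<longrightarrow> m7 (256*n + y) = int (Rx n l w i PW (MW+1) (PW+1) (lbin+1) (n+1) y)"
    using H7 unfolding DI_def by auto
  obtain m8 t8 where B8: "big OUT m7 m8 t8" and H8: "t8 = 11 \<and> m8 1 = int (fact n) \<and>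
     m8 0 = int (R n l w i PW n 0 lbin 0 0 0 1) - int (R n l w i PW n 0 lbin 0 0 0 0)"
    using OUT_spec[OF St7 n1 tab7] by (rule wpE)
  have B: "big PROG ?m0 m8 (t1 + (t2 + (t3 + (t4 + (t5 + (t6 + (t7 + t8)))))))"
    unfolding PROG_def SEQ.simps
    by (rule bSeq[OF B1 bSeq[OF B2 bSeq[OF B3 bSeq[OF B4 bSeq[OF B5 bSeq[OF B6 bSeq[OF B7 B8]]]]]]])
  show ?thesis unfolding wp_def
    by (rule exI[of _ m8], rule exI, rule conjI[OF B]) (use H1 H2 H3 H4 H5 H6 H7 H8 in auto)
qed


lemma w_le_wmax:
  assumes L: "\<forall>k\<in>{1..n}. 0 < l k \<and> l k \<le> lbin" and k: "k \<in> {1..n}"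
  shows "w k \<le> wmax n l w lbin"
proof -
  let ?r = "\<lambda>k. real (w k) / real (l k)"
  let ?M = "Max (?r ` {1..n})"
  have lk: "0 < l k" "l k \<le> lbin" using L k by auto
  have rM: "?r k \<le> ?M" using k by (intro Max_ge) auto
  have r0: "0 \<le> ?r k" by simp
  have "real (w k) = real (l k) * ?r k" using lk by simp
  also have "\<dots> \<le> real lbin * ?r k" using lk r0 by (intro mult_right_mono) auto
  also have "\<dots> \<le> real lbin * ?M" using rM by (intro mult_left_mono) auto
  also have "\<dots> \<le> real_of_int \<lceil>real lbin * ?M\<rceil>" by (rule le_of_int_ceiling)
  finally have "real (w k) \<le> real_of_int \<lceil>real lbin * ?M\<rceil>" .
  then have "int (w k) \<le> \<lceil>real lbin * ?M\<rceil>" by linarith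
  then show ?thesis unfolding wmax_def by linarith
qed

lemma pow_ge: "1 \<le> (x::nat) \<Longrightarrow> a \<le> b \<Longrightarrow> x ^ a \<le> x ^ b"
  by (rule power_increasing)

lemma time_bound:
  fixes n lbin W PW MW :: nat
  assumes "1 \<le> n" "1 \<le> lbin" "1 \<le> W" "PW \<le> n * W" "MW \<le> W"
  shows "66 + 43*n + (n+1) * SZf n lbin PW MW * 102 + 1 \<le> 20000 * lbin ^ 5 * W ^ 5 * n ^ 8"
proof -
  define X where "X = lbin ^ 5 * W ^ 5 * n ^ 8"
  have n8: "n ^ 1 \<le> n ^ 8" "n ^ 3 \<le> n ^ 8" using assms(1) by (intro pow_ge; simp)+
  have l5: "lbin ^ 1 \<le> lbin ^ 5" using assms(2) by (intro pow_ge; simp)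
  have W5: "W ^ 2 \<le> W ^ 5" using assms(3) by (intro pow_ge) simp_all
  have W5b: "1 \<le> W ^ 5" using assms(3) by (rule one_le_power)
  have lp: "1 \<le> lbin ^ 5" using assms(2) by (rule one_le_power)
  have X1: "1 \<le> X" unfolding X_def using assms by simp
  have Xn: "n \<le> X"
  proof -
    have "n = 1 * 1 * n ^ 1" by simp
    also have "\<dots> \<le> lbin ^ 5 * W ^ 5 * n ^ 8" using lp W5 W5b n8 by (intro mult_le_mono) auto
    finally show ?thesis unfolding X_def .
  qed
  have S: "(n+1) * SZf n lbin PW MW \<le> 128 * (n^3 * lbin * W^2)"
  proof -
    have a3: "1 \<le> n * W" using assms by simp
    have a: "n + 1 \<le> 2*n" "lbin + 1 \<le> 2*lbin" "PW + 1 \<le> 2*(n*W)" "MW + 1 \<le> 2*W"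
      using assms a3 by linarith+
    have "PW + 1 \<le> 2*(n*W)" using assms(4) a3 by linarith
    have "(n+1) * SZf n lbin PW MW = (n+1)*(n+1)*(lbin+1)*(PW+1)*(MW+1)*4" by (simp only: SZf_def mult.assoc)
    also have "\<dots> \<le> (2*n)*(2*n)*(2*lbin)*(2*(n*W))*(2*W)*4"
      using a \<open>PW + 1 \<le> 2*(n*W)\<close> by (intro mult_le_mono) auto
    also have "\<dots> = 128 * (n^3 * lbin * W^2)" by (simp add: power_def algebra_simps eval_nat_numeral)
    finally show ?thesis .
  qed
  have S2: "n^3 * lbin * W^2 \<le> X"
  proof -
    have "n^3 * lbin * W^2 = lbin ^ 1 * W ^ 2 * n ^ 3" by simp
    also have "\<dots> \<le> lbin ^ 5 * W ^ 5 * n ^ 8" using l5 W5 n8 by (intro mult_le_mono) auto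
    finally show ?thesis unfolding X_def .
  qed
  have "66 + 43*n + (n+1) * SZf n lbin PW MW * 102 + 1 \<le> 67 * X + 43 * X + 128 * X * 102"
    using X1 Xn S S2 by linarith
  also have "\<dots> \<le> 20000 * X" by simp
  finally show ?thesis unfolding X_def by (simp add: mult.assoc)
qed

theorem theorem4:
  "\<exists>(P :: instr list) (c :: nat). \<forall>n lbin (l :: nat \<Rightarrow> nat) (w :: nat \<Rightarrow> nat) i.
     (\<forall>k\<in>{1..n}. 0 < l k \<and> l k \<le> lbin) \<longrightarrow>
     (\<forall>j\<in>{1..n}. \<forall>k\<in>{1..n}. j \<le> k \<longrightarrow> real (w j) / real (l j) \<ge> real (w k) / real (l k)) \<longrightarrow>
     i \<in> {1..n} \<longrightarrow>
     (\<exists>m. runs_within P (input_mem n lbin l w i)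
              (c * lbin ^ 5 * (max 1 (wmax n l w lbin)) ^ 5 * n ^ 8) m
          \<and> outputs m (shapley {1..n} (greedy_game l w lbin) i))"
proof (rule exI[of _ "comp 0 PROG"], rule exI[of _ 20000], intro allI impI)
  fix n lbin i :: nat and l w :: "nat \<Rightarrow> nat"
  assume L: "\<forall>k\<in>{1..n}. 0 < l k \<and> l k \<le> lbin" and iN: "i \<in> {1..n}"
  define PW where "PW = sum w {1..n}"
  define MW where "MW = Max (insert 0 (w ` {1..n}))"
  define W where "W = max 1 (wmax n l w lbin)"
  have n1: "1 \<le> n" using iN by simp
  have lb: "1 \<le> lbin" using L n1 by (metis atLeastAtMost_iff le_refl less_one not_less order.trans)
  have wk: "\<And>k. k \<in> {1..n} \<Longrightarrow> w k \<le> W" using w_le_wmax[OF L] unfolding W_def by (metis max.coboundedI2)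
  have PWb: "PW \<le> n * W"
  proof -
    have "PW \<le> sum (\<lambda>_. W) {1..n}" unfolding PW_def by (rule sum_mono) (use wk in auto)
    then show ?thesis by simp
  qed
  have MWb: "MW \<le> W" unfolding MW_def using wk by (simp add: Max_le_iff)
  have W1: "1 \<le> W" unfolding W_def by simp
  obtain m t where B: "big PROG (input_mem n lbin l w i) m t" and H: "m 1 = int (fact n) \<and>
     m 0 = int (R n l w i PW n 0 lbin 0 0 0 1) - int (R n l w i PW n 0 lbin 0 0 0 0) \<and>
     t \<le> 66 + 43*n + (n+1) * SZf n lbin PW MW * 102 + 1"
    using prog_spec[OF iN, of lbin l w] unfolding PW_def MW_def by (auto elim: wpE)
  have tb: "t \<le> 20000 * lbin ^ 5 * W ^ 5 * n ^ 8"
    using H time_bound[OF n1 lb W1 PWb MWb] by linarith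
  have RW: "runs_within (comp 0 PROG) (input_mem n lbin l w i) (20000 * lbin ^ 5 * W ^ 5 * n ^ 8) m"
    by (rule runs_within_big[OF B tb])
  have out: "outputs m (shapley {1..n} (greedy_game l w lbin) i)"
  proof -
    have top: "real (R n l w i PW n 0 lbin 0 0 0 1) - real (R n l w i PW n 0 lbin 0 0 0 0)
      = fact n * shapley {1..n} (greedy_game l w lbin) i" unfolding PW_def by (rule R_top[OF iN])
    have fn: "(fact n :: real) \<noteq> 0" by simp
    have "real_of_int (m 0) / real_of_int (m 1) = (real (R n l w i PW n 0 lbin 0 0 0 1) - real (R n l w i PW n 0 lbin 0 0 0 0)) / fact n"
      using H by simp
    also have "\<dots> = shapley {1..n} (greedy_game l w lbin) i" unfolding top using fn by simp
    finally show ?thesis unfolding outputs_def using H by simp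
  qed
  show "\<exists>m. runs_within (comp 0 PROG) (input_mem n lbin l w i) (20000 * lbin ^ 5 * (max 1 (wmax n l w lbin)) ^ 5 * n ^ 8) m
          \<and> outputs m (shapley {1..n} (greedy_game l w lbin) i)"
    using RW out unfolding W_def by blast
qed


end
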